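(* Let $s_0\in(0,1)$, $a\in(0,1/4)$, $\iota=\min\{1/6,s_0/4\}$, and let $D$ be a uniform $C^{1,\mathrm{dini}}$-domain with localization radius $\rho$ whose modulus $\omega$ satisfies condition (M) with this $\iota$; let $\mathfrak d$ be a regularized distance for $D$, and $f(t)=t\omega(t)$. There exist $0<\rho_1<\rho$ and $C>0$ (depending on $s_0,\omega,\rho,a$ and the constants of $D$ and $\mathfrak d$) such that for every $s\in[s_0,1)$, every $x\in D$ with $d_D(x)<\rho_1/2$ and every $\theta\in S^{d-1}$, $$\int_{a d_D(x)}^{\rho_1}\Big|\mathfrak d(x+r\theta)^s-\big(\mathfrak d(x)+\nabla\mathfrak d(x)\cdot r\theta\big)_+^s\Big|\frac{dr}{r^{1+2s}}\le C\,\frac{\omega(f^{-1}(d_D(x)))}{d_D(x)^s}\,G_s\big(\omega(f^{-1}(d_D(x)))\big),$$ where $G_s(w)=\frac{w^{2s-1}-1}{1-2s}$ for $s\ne1/2$ and $G_{1/2}(w)=\ln(1/w)$.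
   Context: Uniform $C^{1,\mathrm{dini}}$-domain: open $D$ with a continuous nondecreasing $\omega:[0,\infty)\to[0,\infty)$, $\omega(0)=0$, $\limsup_{t\to\infty}\omega(t)/t<\infty$, $\int_0^1\omega(t)/t\,dt<\infty$, a radius $\rho>0$ and $C_0>0$ such that for each $z\in\partial D$ there are a rigid motion $\Phi_z$, $\Phi_z(z)=0$, and $\phi\in C^1(\mathbb{R}^{d-1})$ with $\|\phi\|_{C^1}\le C_0$, $\phi(0)=0$, $\nabla\phi(0)=0$, $|\nabla\phi(x')-\nabla\phi(y')|\le\omega(|x'-y'|)$, $\Phi_z(D)\cap B_\rho=\{x\in B_\rho:x_d>\phi(x')\}$. Condition (M) with parameter $\iota$: $\omega$ is continuous, increasing and concave on $[0,\infty)$, $C^2$ on $(0,\infty)$, $\omega(0)=0$, satisfies $\int_0^1\omega(t)/t\,dt<\infty$, and there is $t_0>0$ such that $\omega(t)/t^\iota$ is decreasing on $(0,t_0)$ and $t^2\omega''(t)\ge-\omega(t)-3t\omega'(t)$ on $(0,t_0)$. ($f(t)=t\omega(t)$ is then strictly increasing and onto $[0,\infty)$.) $d_D(x)=\mathrm{dist}(x,\mathbb{R}^d\setminus D)$. Regularized distance for $D$: a function $\mathfrak d\in C^{0,1}(\mathbb{R}^d)\cap C^2(\mathbb{R}^d\setminus\partial D)$ with constants $C_1,C_2,C_3$ such that $C_1^{-1}d_D\le\mathfrak d\le C_1d_D$, $|\nabla\mathfrak d(x)-\nabla\mathfrak d(y)|\le C_2\omega(|x-y|)$, and $|D^2\mathfrak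 d(x)|\le C_3\,\omega(d_D(x))/d_D(x)$. $t_+=\max(t,0)$. *)

theory Defs
  imports "HOL-Analysis.Analysis"
begin

definition dD :: "'a::euclidean_space set \<Rightarrow> 'a \<Rightarrow> real" where
  "dD D x = infdist x (- D)"

definition rigid_motion :: "('a::euclidean_space \<Rightarrow> 'a) \<Rightarrow> bool" where
  "rigid_motion \<Phi> \<longleftrightarrow> (\<forall>x y. dist (\<Phi> x) (\<Phi> y) = dist x y)"

definition dini_modulus :: "(real \<Rightarrow> real) \<Rightarrow> bool" where
  "dini_modulus \<omega> \<longleftrightarrow>
     continuous_on {0..} \<omega> \<and> mono_on {0..} \<omega> \<and> \<omega> 0 = 0 \<and> (\<forall>t\<ge>0. \<omega> t \<ge> 0) \<and>
     Limsup at_top (\<lambda>t. ereal (\<omega> t / t)) < \<infinity> \<and>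
     (\<lambda>t. \<omega> t / t) integrable_on {0..1}"

text \<open>R^(d-1) is identified with the hyperplane orthogonal to a coordinate vector e (the
  x_d direction); the graph function \<phi> is defined on R^d but is required to depend
  only on the projection x' = x - (x.e) e, and g is its gradient.\<close>
definition uniform_C1dini_domain ::
  "'a::euclidean_space set \<Rightarrow> (real \<Rightarrow> real) \<Rightarrow> real \<Rightarrow> real \<Rightarrow> bool" where
  "uniform_C1dini_domain D \<omega> \<rho> C0 \<longleftrightarrow>
     open D \<and> dini_modulus \<omega> \<and> \<rho> > 0 \<and> C0 > 0 \<and>
     (\<forall>z\<in>frontier D. \<exists>\<Phi> (\<phi>::'a \<Rightarrow> real) (g::'a \<Rightarrow> 'a) e.
        e \<in> Basis \<and> rigid_motion \<Phi> \<and> \<Phi> z = 0 \<and>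
        (\<forall>x. \<phi> x = \<phi> (x - (x \<bullet> e) *\<^sub>R e)) \<and>
        (\<forall>x. (\<phi> has_derivative (\<lambda>h. g x \<bullet> h)) (at x)) \<and> continuous_on UNIV g \<and>
        (\<forall>x y. \<bar>\<phi> x\<bar> + norm (g y) \<le> C0) \<and>
        \<phi> 0 = 0 \<and> g 0 = 0 \<and>
        (\<forall>x y. x \<bullet> e = 0 \<longrightarrow> y \<bullet> e = 0 \<longrightarrow> norm (g x - g y) \<le> \<omega> (dist x y)) \<and>
        \<Phi> ` D \<inter> ball 0 \<rho> = {x \<in> ball 0 \<rho>. x \<bullet> e > \<phi> x})"

definition condM :: "real \<Rightarrow> (real \<Rightarrow> real) \<Rightarrow> bool" where
  "condM \<iota> \<omega> \<longleftrightarrow>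
     continuous_on {0..} \<omega> \<and> strict_mono_on {0..} \<omega> \<and> concave_on {0..} \<omega> \<and>
     (\<forall>t>0. \<omega> differentiable (at t) \<and> deriv \<omega> differentiable (at t)) \<and>
     continuous_on {0<..} (deriv (deriv \<omega>)) \<and>
     \<omega> 0 = 0 \<and> (\<lambda>t. \<omega> t / t) integrable_on {0..1} \<and>
     (\<exists>t0>0. antimono_on {0<..<t0} (\<lambda>t. \<omega> t / t powr \<iota>) \<and>
        (\<forall>t\<in>{0<..<t0}. t\<^sup>2 * deriv (deriv \<omega>) t \<ge> - \<omega> t - 3 * t * deriv \<omega> t))"

definition regularized_distance ::
  "'a::euclidean_space set \<Rightarrow> (real \<Rightarrow> real) \<Rightarrow> ('a \<Rightarrow> real) \<Rightarrow> ('a \<Rightarrow> 'a)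
     \<Rightarrow> real \<Rightarrow> real \<Rightarrow> real \<Rightarrow> bool" where
  "regularized_distance D \<omega> \<dd> g C1 C2 C3 \<longleftrightarrow>
     C1 > 0 \<and> C2 > 0 \<and> C3 > 0 \<and>
     (\<exists>L. \<forall>x y. \<bar>\<dd> x - \<dd> y\<bar> \<le> L * dist x y) \<and>
     (\<forall>x. dD D x / C1 \<le> \<dd> x \<and> \<dd> x \<le> C1 * dD D x) \<and>
     (\<exists>H::'a \<Rightarrow> 'a \<Rightarrow> 'a.
        (\<forall>x\<in>D. (\<dd> has_derivative (\<lambda>h. g x \<bullet> h)) (at x) \<and> (g has_derivative H x) (at x)) \<and>
        (\<forall>v. continuous_on D (\<lambda>x. H x v)) \<and>
        (\<forall>x\<in>D. onorm (H x) \<le> C3 * \<omega> (dD D x) / dD D x)) \<and>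
     (\<forall>x\<in>D. \<forall>y\<in>D. norm (g x - g y) \<le> C2 * \<omega> (dist x y))"

definition Gs :: "real \<Rightarrow> real \<Rightarrow> real" where
  "Gs s w = (if s = 1 / 2 then ln (1 / w) else (w powr (2 * s - 1) - 1) / (1 - 2 * s))"

definition posp :: "real \<Rightarrow> real" where
  "posp t = max t 0"

end

theory Submission
  imports Defs
begin


lemma powr_has_integral:
  fixes A B c :: real
  assumes "0 < A" "A \<le> B" "c \<noteq> -1"
  shows "((\<lambda>r. r powr c) has_integral (B powr (c+1) - A powr (c+1)) / (c+1)) {A..B}"
proof -
  have "((\<lambda>r. r powr c) has_integral (\<lambda>r. r powr (c+1) / (c+1)) B - (\<lambda>r. r powr (c+1) / (c+1)) A) {A..B}"
  proof (rule fundamental_theorem_of_calculus)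
    show "A \<le> B" by fact
    fix r assume r: "r \<in> {A..B}"
    then have "r > 0" using assms by auto
    have "((\<lambda>r. r powr (c+1) / (c+1)) has_real_derivative ((c+1) * r powr (c+1-1)) / (c+1)) (at r)"
      using DERIV_cdivide[OF has_real_derivative_powr[OF \<open>r>0\<close>, of "c+1"], of "c+1"] by simp
    moreover have "((c+1) * r powr (c+1-1)) / (c+1) = r powr c" using assms by simp
    ultimately show "((\<lambda>r. r powr (c+1) / (c+1)) has_vector_derivative r powr c) (at r within {A..B})"
      by (simp add: has_real_derivative_iff_has_vector_derivative has_vector_derivative_at_within)
  qed
  then show ?thesis by (simp add: diff_divide_distrib)
qed

definition Q :: "real \<Rightarrow> real \<Rightarrow> real \<Rightarrow> real" where
  "Q s A B = (if s = 1/2 then ln B - ln A else (B powr (1 - 2 * s) - A powr (1 - 2 * s))/(1 - 2 * s))"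

lemma Q_has_integral:
  assumes "0 < A" "A \<le> B"
  shows "((\<lambda>r. r powr (- 2 * s)) has_integral Q s A B) {A..B}"
proof (cases "s = 1/2")
  case True
  have h: "((\<lambda>r. 1 / r) has_integral (ln B - ln A)) {A..B}"
  proof (rule fundamental_theorem_of_calculus)
    show "A \<le> B" by fact
    fix r assume r: "r \<in> {A..B}"
    then have "r > 0" using assms by auto
    then show "(ln has_vector_derivative 1 / r) (at r within {A..B})"
      by (auto intro!: derivative_eq_intros simp: has_real_derivative_iff_has_vector_derivative[symmetric] 
           intro: has_field_derivative_at_within)
  qed
  have eq: "r powr (- 2 * s) = 1 / r" if "r \<in> {A..B}" for r
  proof -
    have "r > 0" using that assms by auto
    have "2 * s = 1" using True by simp
    then show ?thesis using \<open>r>0\<close> by (simp add: powr_minus_divide)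
  qed
  have "((\<lambda>r. r powr (- 2 * s)) has_integral (ln B - ln A)) {A..B}"
    by (rule has_integral_spike_finite[OF finite.emptyI _ h]) (use eq in auto)
  moreover have "Q s A B = ln B - ln A" using True by (simp add: Q_def)
  ultimately show ?thesis by simp
next
  case False
  have "- 2 * s \<noteq> - 1" using False by auto
  from powr_has_integral[OF assms this] show ?thesis using False
    by (simp add: Q_def)
qed

lemma Q_nonneg: "0 < A \<Longrightarrow> A \<le> B \<Longrightarrow> Q s A B \<ge> 0"
  using has_integral_nonneg[OF Q_has_integral] by auto

lemma Q_add: "0 < A \<Longrightarrow> A \<le> B \<Longrightarrow> B \<le> C \<Longrightarrow> Q s A B + Q s B C = Q s A C"
  by (auto simp: Q_def diff_divide_distrib)

lemma Q_mono: "0 < A \<Longrightarrow> A \<le> A' \<Longrightarrow> A' \<le> B' \<Longrightarrow> B' \<le> B \<Longrightarrow> Q s A' B' \<le> Q s A B"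
  using Q_add[of A A' B' s] Q_add[of A B' B s] Q_nonneg[of A A' s] Q_nonneg[of B' B s] by auto

lemma Q_lower: assumes "0 < A" "A \<le> B" "0 \<le> s" shows "(B - A) * B powr (- 2 * s) \<le> Q s A B"
proof -
  have "integral {A..B} (\<lambda>r. B powr (- 2 * s)) \<le> integral {A..B} (\<lambda>r. r powr (- 2 * s))"
    by (rule integral_le) (use Q_has_integral[OF assms(1,2)] assms in \<open>auto intro!: powr_mono2'\<close>)
  then show ?thesis using Q_has_integral[OF assms(1,2), of s] assms by (simp add: integral_unique)
qed

lemma Q_upper: assumes "0 < A" "A \<le> B" "0 \<le> s" shows "Q s A B \<le> (B - A) * A powr (- 2 * s)"
proof -
  have "integral {A..B} (\<lambda>r. r powr (- 2 * s)) \<le> integral {A..B} (\<lambda>r. A powr (- 2 * s))"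
    by (rule integral_le) (use Q_has_integral[OF assms(1,2)] assms in \<open>auto intro!: powr_mono2'\<close>)
  then show ?thesis using Q_has_integral[OF assms(1,2), of s] assms by (simp add: integral_unique)
qed

lemma Q_scale: assumes "0 < A" "A \<le> B" "0 < c" shows "Q s (c*A) (c*B) = c powr (1 - 2 * s) * Q s A B"
proof (cases "s = 1/2")
  case True
  then have "1 - 2 * s = 0" by simp
  then have c1: "c powr (1 - 2 * s) = 1" using assms by simp
  have "Q s (c*A) (c*B) = Q s A B" using assms True by (simp add: Q_def ln_mult)
  then show ?thesis by (simp add: c1)
next
  case False
  then show ?thesis using assms by (simp add: Q_def powr_mult right_diff_distrib)
qed

lemma Gs_Q: assumes "0 < w" shows "Gs s w = Q s 1 (1/w)"
  using assms by (auto simp: Gs_def Q_def powr_divide powr_minus_divide[symmetric] )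


lemma abs_powr_has_integral:
  fixes c h s :: real
  assumes "0 < h" "0 < s"
  shows "((\<lambda>r. \<bar>r - c\<bar> powr (s - 1)) has_integral (2 * h powr s / s)) {c-h..c+h}"
proof -
  have L: "((\<lambda>r. \<bar>r - c\<bar> powr (s - 1)) has_integral ((\<lambda>r. - ((c - r) powr s / s)) c - (\<lambda>r. - ((c - r) powr s / s)) (c-h))) {c-h..c}"
  proof (rule fundamental_theorem_of_calculus_interior)
    show "c - h \<le> c" using assms by simp
    show "continuous_on {c-h..c} (\<lambda>r. - ((c - r) powr s / s))"
      using assms by (intro continuous_intros continuous_on_powr') auto
    fix r assume "r \<in> {c-h<..<c}"
    then have r: "c - r > 0" by auto
    have "((\<lambda>r. - ((c - r) powr s / s)) has_real_derivative - (s * (c - r) powr (s - 1) * (0 - 1) / s)) (at r)"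
      using r by (auto intro!: derivative_eq_intros)
    moreover have "- (s * (c - r) powr (s - 1) * (0 - 1) / s) = \<bar>r - c\<bar> powr (s - 1)"
      using r assms by (simp add: abs_minus_commute abs_of_pos)
    ultimately show "((\<lambda>r. - ((c - r) powr s / s)) has_vector_derivative \<bar>r - c\<bar> powr (s - 1)) (at r)"
      by (simp add: has_real_derivative_iff_has_vector_derivative)
  qed
  have R: "((\<lambda>r. \<bar>r - c\<bar> powr (s - 1)) has_integral ((\<lambda>r. (r - c) powr s / s) (c+h) - (\<lambda>r. (r - c) powr s / s) c)) {c..c+h}"
  proof (rule fundamental_theorem_of_calculus_interior)
    show "c \<le> c + h" using assms by simp
    show "continuous_on {c..c+h} (\<lambda>r. (r - c) powr s / s)"
      using assms by (intro continuous_intros continuous_on_powr') auto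
    fix r assume "r \<in> {c<..<c+h}"
    then have r: "r - c > 0" by auto
    have "((\<lambda>r. (r - c) powr s / s) has_real_derivative (s * (r - c) powr (s - 1) * (1 - 0) / s)) (at r)"
      using r by (auto intro!: derivative_eq_intros)
    moreover have "(s * (r - c) powr (s - 1) * (1 - 0) / s) = \<bar>r - c\<bar> powr (s - 1)"
      using r assms by simp
    ultimately show "((\<lambda>r. (r - c) powr s / s) has_vector_derivative \<bar>r - c\<bar> powr (s - 1)) (at r)"
      by (simp add: has_real_derivative_iff_has_vector_derivative)
  qed
  have "((\<lambda>r. \<bar>r - c\<bar> powr (s - 1)) has_integral (h powr s / s + h powr s / s)) {c-h..c+h}"
    using has_integral_combine[of "c-h" c "c+h", OF _ _ L R] assms by simp
  then show ?thesis by (simp add: field_simps)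
qed

lemma powr_add_le:
  fixes x y s :: real
  assumes "0 \<le> x" "0 \<le> y" "0 < s" "s \<le> 1"
  shows "(x + y) powr s \<le> x powr s + y powr s"
proof (cases "x + y = 0")
  case True then show ?thesis using assms by simp
next
  case False
  then have xy: "x + y > 0" using assms by simp
  have key: "z / (x+y) * (x+y) powr s \<le> z powr s" if "0 \<le> z" "z \<le> x + y" for z
  proof -
    have t: "0 \<le> z / (x+y)" "z / (x+y) \<le> 1" using that xy by auto
    have "z / (x+y) \<le> (z / (x+y)) powr s"
    proof (cases "z = 0")
      case True then show ?thesis by simp
    next
      case False
      then have "z / (x+y) > 0" using t that xy by auto
      then have "(z/(x+y)) powr 1 \<le> (z/(x+y)) powr s"
        using t assms by (intro powr_mono') auto
      then show ?thesis using \<open>z/(x+y)>0\<close> powr_one[of "z/(x+y)"] by linarith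
    qed
    then have "z / (x+y) * (x+y) powr s \<le> (z / (x+y)) powr s * (x+y) powr s"
      by (intro mult_right_mono) auto
    also have "\<dots> = z powr s" using that xy by (simp add: powr_divide)
    finally show ?thesis .
  qed
  have "x / (x+y) * (x+y) powr s + y / (x+y) * (x+y) powr s = (x/(x+y) + y/(x+y)) * (x+y) powr s"
    by (simp add: distrib_right)
  also have "x/(x+y) + y/(x+y) = 1" using xy by (simp add: add_divide_distrib[symmetric])
  finally have "(x+y) powr s = x / (x+y) * (x+y) powr s + y / (x+y) * (x+y) powr s" by simp
  also have "\<dots> \<le> x powr s + y powr s"
    using key[of x] key[of y] assms by (intro add_mono) auto
  finally show ?thesis .
qed

lemma powr_diff_sub:
  fixes A B s :: real
  assumes "0 \<le> A" "0 \<le> B" "0 < s" "s \<le> 1"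
  shows "\<bar>A powr s - B powr s\<bar> \<le> \<bar>A - B\<bar> powr s"
proof -
  have *: "Y powr s - X powr s \<le> (Y - X) powr s" if "0 \<le> X" "X \<le> Y" for X Y
    using powr_add_le[of X "Y - X" s] that assms by simp
  show ?thesis
  proof (cases "B \<le> A")
    case True
    then have "B powr s \<le> A powr s" using assms by (intro powr_mono2) auto
    then show ?thesis using *[of B A] True assms by simp
  next
    case False
    then have "A powr s \<le> B powr s" using assms by (intro powr_mono2) auto
    then show ?thesis using *[of A B] False assms by (simp add: abs_minus_commute)
  qed
qed

lemma powr_diff_max:
  fixes A B s :: real
  assumes "0 \<le> A" "0 \<le> B" "A \<le> N" "B \<le> N" "0 < s"
  shows "\<bar>A powr s - B powr s\<bar> \<le> N powr s"
proof -
  have "A powr s \<le> N powr s" "B powr s \<le> N powr s" using assms by (auto intro: powr_mono2)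
  then show ?thesis using powr_ge_zero[of A s] powr_ge_zero[of B s] by (simp only: abs_le_iff) linarith
qed

lemma powr_diff_lin:
  fixes A B s :: real
  assumes "0 \<le> B" "B \<le> A" "0 < A" "0 < s" "s < 1"
  shows "A powr s - B powr s \<le> (A - B) * A powr (s - 1)"
proof -
  have "B * A powr (s - 1) \<le> B powr s"
  proof (cases "B = 0")
    case True then show ?thesis by simp
  next
    case False
    then have "B > 0" using assms by simp
    have "A powr (s - 1) \<le> B powr (s - 1)" using assms \<open>B>0\<close> by (intro powr_mono2') auto
    then have "B * A powr (s - 1) \<le> B * B powr (s - 1)" using \<open>B>0\<close> by (intro mult_left_mono) auto
    also have "\<dots> = B powr s" using \<open>B>0\<close> by (simp add: powr_diff field_simps)
    finally show ?thesis .
  qed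
  moreover have "A * A powr (s - 1) = A powr s" using assms by (simp add: powr_diff field_simps)
  ultimately show ?thesis by (simp add: left_diff_distrib)
qed

lemma powr_diff_first:
  fixes u l E s :: real
  assumes "0 \<le> u" "\<bar>u - l\<bar> \<le> E" "l \<noteq> 0" "0 < s" "s < 1"
  shows "\<bar>u powr s - posp l powr s\<bar> \<le> E * \<bar>l\<bar> powr (s - 1)"
proof (cases "l > 0")
  case True
  then have pl: "posp l = l" by (simp add: posp_def)
  show ?thesis
  proof (cases "u \<le> l")
    case True
    have "l powr s - u powr s \<le> (l - u) * l powr (s - 1)"
      using powr_diff_lin[of u l s] True assms \<open>l>0\<close> by auto
    moreover have "u powr s \<le> l powr s" using True assms by (intro powr_mono2) auto
    moreover have "(l - u) * l powr (s - 1) \<le> E * l powr (s - 1)"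
      using assms True by (intro mult_right_mono) auto
    ultimately show ?thesis using pl abs_of_pos[OF \<open>l>0\<close>] by (smt (verit))
  next
    case False
    have "u powr s - l powr s \<le> (u - l) * u powr (s - 1)"
      using powr_diff_lin[of l u s] False assms \<open>l>0\<close> by auto
    moreover have "l powr s \<le> u powr s" using False \<open>l>0\<close> assms by (intro powr_mono2) auto
    moreover have "u powr (s - 1) \<le> l powr (s - 1)" using False \<open>l>0\<close> assms by (intro powr_mono2') auto
    moreover have "(u - l) * u powr (s - 1) \<le> E * l powr (s - 1)"
      using assms False \<open>u powr (s - 1) \<le> l powr (s - 1)\<close>
      by (intro mult_mono) auto
    ultimately show ?thesis using pl abs_of_pos[OF \<open>l>0\<close>] by (smt (verit))
  qed
next
  case False
  then have l: "l < 0" using assms by simp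
  then have pl: "posp l = 0" by (simp add: posp_def)
  have uE: "u \<le> E - \<bar>l\<bar>" using assms l by auto
  have "u powr s \<le> E * \<bar>l\<bar> powr (s - 1)"
  proof (cases "\<bar>l\<bar> \<le> u")
    case True
    then have "u > 0" using l by auto
    have "u powr s = u * u powr (s - 1)" using \<open>u>0\<close> by (simp add: powr_diff field_simps)
    also have "\<dots> \<le> E * \<bar>l\<bar> powr (s - 1)"
      using True uE l assms \<open>u>0\<close> by (intro mult_mono powr_mono2') auto
    finally show ?thesis .
  next
    case False
    have "u powr s \<le> \<bar>l\<bar> powr s" using False assms by (intro powr_mono2) auto
    also have "\<dots> = \<bar>l\<bar> * \<bar>l\<bar> powr (s - 1)" using l by (simp add: powr_diff field_simps)
    also have "\<dots> \<le> E * \<bar>l\<bar> powr (s - 1)" using uE assms by (intro mult_right_mono) auto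
    finally show ?thesis .
  qed
  then show ?thesis using pl assms by simp
qed


locale ray =
  fixes D :: "'a::euclidean_space set" and dd :: "'a \<Rightarrow> real" and g :: "'a \<Rightarrow> 'a"
    and \<omega> :: "real \<Rightarrow> real" and C1 C2 L :: real and x \<theta> :: 'a
  assumes openD: "open D"
    and lip: "\<forall>y z. \<bar>dd y - dd z\<bar> \<le> L * dist y z"
    and comp: "\<forall>y. dD D y / C1 \<le> dd y \<and> dd y \<le> C1 * dD D y"
    and C1: "C1 > 0" and C2: "C2 > 0"
    and der: "\<forall>y\<in>D. (dd has_derivative (\<lambda>h. g y \<bullet> h)) (at y)"
    and gmod: "\<forall>y\<in>D. \<forall>z\<in>D. norm (g y - g z) \<le> C2 * \<omega> (dist y z)"
    and wmono: "mono_on {0..} \<omega>" and wnn: "\<forall>t\<ge>0. \<omega> t \<ge> 0"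
    and xD: "x \<in> D" and th: "norm \<theta> = 1" and dpos: "dD D x > 0"
begin

definition "u r = dd (x + r *\<^sub>R \<theta>)"
definition "dl = dd x"
definition "p = g x \<bullet> \<theta>"
definition "l r = dl + r * p"

lemma dd_cont: "continuous_on S dd"
proof -
  have "lipschitz_on (max L 0) UNIV dd"
    unfolding lipschitz_on_def dist_real_def
  proof safe
    fix y z :: 'a
    have "\<bar>dd y - dd z\<bar> \<le> L * dist y z" using lip by auto
    also have "\<dots> \<le> max L 0 * dist y z" by (intro mult_right_mono) auto
    finally show "\<bar>dd y - dd z\<bar> \<le> max L 0 * dist y z" .
  qed auto
  then have "continuous_on UNIV dd" by (rule lipschitz_on_continuous_on)
  then show ?thesis by (rule continuous_on_subset) auto
qed

lemma u_cont: "continuous_on S u"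
  unfolding u_def by (intro continuous_on_compose2[OF dd_cont[of UNIV]] continuous_intros) auto

lemma dD_nonneg: "dD D y \<ge> 0" by (simp add: dD_def infdist_nonneg)

lemma dd_nonneg: "dd y \<ge> 0"
  using comp[rule_format, of y] dD_nonneg[of y] C1 by (smt (verit) divide_nonneg_pos)

lemma u_nonneg: "u r \<ge> 0" by (simp add: u_def dd_nonneg)

lemma dD_out: "y \<notin> D \<Longrightarrow> dD D y = 0"
  using infdist_le[of y "-D" y] dD_nonneg[of y] by (simp add: dD_def)

lemma dd_out: "y \<notin> D \<Longrightarrow> dd y = 0"
  using comp[rule_format, of y] dD_out[of y] dd_nonneg[of y] by simp

lemma dl_bounds: "dD D x / C1 \<le> dl" "dl \<le> C1 * dD D x" "dl > 0"
  using comp[rule_format, of x] dpos C1 by (auto simp: dl_def intro: less_le_trans[rotated])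

lemma u0: "u 0 = dl" by (simp add: u_def dl_def)

lemma ball_in: assumes "0 \<le> t" "t < dD D x" shows "x + t *\<^sub>R \<theta> \<in> D"
proof (rule ccontr)
  assume "x + t *\<^sub>R \<theta> \<notin> D"
  then have "dD D x \<le> dist x (x + t *\<^sub>R \<theta>)" unfolding dD_def by (intro infdist_le) auto
  also have "\<dots> = t" using th assms by (simp add: dist_norm)
  finally show False using assms by simp
qed

lemma u_deriv: assumes "x + t *\<^sub>R \<theta> \<in> D"
  shows "(u has_real_derivative (g (x + t *\<^sub>R \<theta>) \<bullet> \<theta>)) (at t)"
proof -
  have d1: "((\<lambda>t. x + t *\<^sub>R \<theta>) has_derivative (\<lambda>h. h *\<^sub>R \<theta>)) (at t)"
    by (auto intro!: derivative_eq_intros)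
  have "((\<lambda>t. dd (x + t *\<^sub>R \<theta>)) has_derivative (\<lambda>h. g (x + t *\<^sub>R \<theta>) \<bullet> (h *\<^sub>R \<theta>))) (at t)"
    using diff_chain_at[OF d1 der[rule_format, OF assms]] by (simp add: o_def)
  moreover have "(\<lambda>h. g (x + t *\<^sub>R \<theta>) \<bullet> (h *\<^sub>R \<theta>)) = (*) (g (x + t *\<^sub>R \<theta>) \<bullet> \<theta>)"
    by (auto simp: fun_eq_iff)
  ultimately show ?thesis unfolding u_def has_field_derivative_def by simp
qed

lemma mvt_ray:
  assumes "a < b" "\<And>t. a < t \<Longrightarrow> t < b \<Longrightarrow> x + t *\<^sub>R \<theta> \<in> D"
  obtains \<xi> where "a < \<xi>" "\<xi> < b" "x + \<xi> *\<^sub>R \<theta> \<in> D" "u b - u a = (b - a) * (g (x + \<xi> *\<^sub>R \<theta>) \<bullet> \<theta>)"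
proof -
  obtain \<xi> where "a < \<xi>" "\<xi> < b" "u b - u a = (\<lambda>h. (g (x + \<xi> *\<^sub>R \<theta>) \<bullet> \<theta>) * h) (b - a)"
  proof (rule mvt[OF assms(1) u_cont])
    fix t assume "a < t" "t < b"
    then show "(u has_derivative (\<lambda>h. (g (x + t *\<^sub>R \<theta>) \<bullet> \<theta>) * h)) (at t)"
      using u_deriv[OF assms(2)] by (simp add: has_field_derivative_def)
  qed auto
  then show ?thesis using that assms(2) by (simp add: mult.commute)
qed

lemma g_close: assumes "0 \<le> t" "x + t *\<^sub>R \<theta> \<in> D"
  shows "\<bar>g (x + t *\<^sub>R \<theta>) \<bullet> \<theta> - p\<bar> \<le> C2 * \<omega> t"
proof -
  have "\<bar>g (x + t *\<^sub>R \<theta>) \<bullet> \<theta> - p\<bar> = \<bar>(g (x + t *\<^sub>R \<theta>) - g x) \<bullet> \<theta>\<bar>"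
    by (simp add: p_def inner_diff_left)
  also have "\<dots> \<le> norm (g (x + t *\<^sub>R \<theta>) - g x) * norm \<theta>" by (rule Cauchy_Schwarz_ineq2)
  also have "\<dots> \<le> C2 * \<omega> (dist (x + t *\<^sub>R \<theta>) x)" using gmod assms xD th by auto
  also have "dist (x + t *\<^sub>R \<theta>) x = t" using th assms by (simp add: dist_norm)
  finally show ?thesis .
qed

lemma first_order:
  assumes "0 \<le> r" "\<And>t. 0 < t \<Longrightarrow> t < r \<Longrightarrow> x + t *\<^sub>R \<theta> \<in> D"
  shows "\<bar>u r - l r\<bar> \<le> C2 * r * \<omega> r"
proof (cases "r = 0")
  case True then show ?thesis by (simp add: u0 l_def)
next
  case False
  then have r: "0 < r" using assms by simp
  obtain \<xi> where \<xi>: "0 < \<xi>" "\<xi> < r" "x + \<xi> *\<^sub>R \<theta> \<in> D" "u r - u 0 = (r - 0) * (g (x + \<xi> *\<^sub>R \<theta>) \<bullet> \<theta>)"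
    using mvt_ray[OF r assms(2)] by blast
  have "u r - l r = r * (g (x + \<xi> *\<^sub>R \<theta>) \<bullet> \<theta> - p)" using \<xi> by (simp add: u0 l_def algebra_simps)
  then have "\<bar>u r - l r\<bar> = r * \<bar>g (x + \<xi> *\<^sub>R \<theta>) \<bullet> \<theta> - p\<bar>" using r by (simp add: abs_mult)
  also have "\<dots> \<le> r * (C2 * \<omega> \<xi>)" using g_close[of \<xi>] \<xi> r by (intro mult_left_mono) auto
  also have "\<dots> \<le> r * (C2 * \<omega> r)" using \<xi> r C2 wmono by (intro mult_left_mono mono_onD[OF wmono]) (auto simp: mono_on_def)
  finally show ?thesis by (simp add: mult_ac)
qed

lemma closed_out: "closed {t. x + t *\<^sub>R \<theta> \<in> -D}"
proof -
  have "closed ((\<lambda>t. x + t *\<^sub>R \<theta>) -` (-D))"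
    using openD by (intro continuous_closed_vimage) (auto intro!: continuous_intros)
  then show ?thesis by (simp add: vimage_def)
qed

lemma exit_first:
  assumes "t1 \<in> {a..b}" "x + t1 *\<^sub>R \<theta> \<notin> D"
  obtains rs where "rs \<in> {a..b}" "x + rs *\<^sub>R \<theta> \<notin> D" "\<And>t. a \<le> t \<Longrightarrow> t < rs \<Longrightarrow> x + t *\<^sub>R \<theta> \<in> D"
proof -
  let ?Z = "{a..b} \<inter> {t. x + t *\<^sub>R \<theta> \<in> -D}"
  have cl: "closed ?Z" using closed_out by auto
  have ne: "?Z \<noteq> {}" using assms by auto
  have bb: "bdd_below ?Z" by (rule bdd_belowI[of _ a]) auto
  have "Inf ?Z \<in> ?Z" by (rule closed_contains_Inf[OF ne bb cl])
  moreover have "x + t *\<^sub>R \<theta> \<in> D" if "a \<le> t" "t < Inf ?Z" for t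
  proof (rule ccontr)
    assume "x + t *\<^sub>R \<theta> \<notin> D"
    moreover have "t \<le> b" using \<open>Inf ?Z \<in> ?Z\<close> that by auto
    ultimately have "t \<in> ?Z" using that by auto
    then have "Inf ?Z \<le> t" by (intro cInf_lower bb)
    then show False using that by simp
  qed
  ultimately show ?thesis using that by auto
qed

lemma exit_last:
  assumes "a \<le> b" "x + a *\<^sub>R \<theta> \<notin> D" "x + b *\<^sub>R \<theta> \<in> D"
  obtains r1 where "a \<le> r1" "r1 < b" "x + r1 *\<^sub>R \<theta> \<notin> D" "\<And>t. r1 < t \<Longrightarrow> t \<le> b \<Longrightarrow> x + t *\<^sub>R \<theta> \<in> D"
proof -
  let ?Z = "{a..b} \<inter> {t. x + t *\<^sub>R \<theta> \<in> -D}"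
  have cl: "closed ?Z" using closed_out by auto
  have ne: "?Z \<noteq> {}" using assms by auto
  have bb: "bdd_above ?Z" by (rule bdd_aboveI[of _ b]) auto
  have S: "Sup ?Z \<in> ?Z" by (rule closed_contains_Sup[OF ne bb cl])
  moreover have "x + t *\<^sub>R \<theta> \<in> D" if "Sup ?Z < t" "t \<le> b" for t
  proof (rule ccontr)
    assume "x + t *\<^sub>R \<theta> \<notin> D"
    moreover have "a \<le> t" using S that by auto
    ultimately have "t \<in> ?Z" using that by auto
    then have "t \<le> Sup ?Z" by (intro cSup_upper bb)
    then show False using that by simp
  qed
  moreover have "Sup ?Z \<noteq> b" using S assms by auto
  ultimately show ?thesis using that S by force
qed

end


context ray begin

lemma wmono': "0 \<le> a \<Longrightarrow> a \<le> b \<Longrightarrow> \<omega> a \<le> \<omega> b"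
  using wmono by (auto simp: mono_on_def)

definition "is_exit rs \<longleftrightarrow> 0 < rs \<and> x + rs *\<^sub>R \<theta> \<notin> D \<and> (\<forall>t. 0 \<le> t \<and> t < rs \<longrightarrow> x + t *\<^sub>R \<theta> \<in> D)"

lemma exit_ex: assumes "0 \<le> r" "t1 \<in> {0..r}" "x + t1 *\<^sub>R \<theta> \<notin> D"
  obtains rs where "is_exit rs" "rs \<le> r" "dD D x \<le> rs"
proof -
  obtain rs where rs: "rs \<in> {0..r}" "x + rs *\<^sub>R \<theta> \<notin> D" "\<And>t. 0 \<le> t \<Longrightarrow> t < rs \<Longrightarrow> x + t *\<^sub>R \<theta> \<in> D"
    using exit_first[OF assms(2,3)] by blast
  have "dD D x \<le> rs" using ball_in[of rs] rs by force
  then show ?thesis using that rs dpos by (auto simp: is_exit_def)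
qed

lemma ex_l: assumes "is_exit rs" shows "\<bar>l rs\<bar> \<le> C2 * rs * \<omega> rs"
proof -
  have "u rs = 0" using assms dd_out by (auto simp: is_exit_def u_def)
  moreover have "\<bar>u rs - l rs\<bar> \<le> C2 * rs * \<omega> rs"
    using assms by (intro first_order) (auto simp: is_exit_def)
  ultimately show ?thesis by simp
qed

lemma ex_p: assumes "is_exit rs" shows "p \<le> - dl / rs + C2 * \<omega> rs"
proof -
  have rs: "0 < rs" using assms by (auto simp: is_exit_def)
  obtain \<xi> where \<xi>: "0 < \<xi>" "\<xi> < rs" "x + \<xi> *\<^sub>R \<theta> \<in> D" "u rs - u 0 = (rs - 0) * (g (x + \<xi> *\<^sub>R \<theta>) \<bullet> \<theta>)"
    using mvt_ray[OF rs] assms by (auto simp: is_exit_def)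
  have "u rs = 0" using assms dd_out by (auto simp: is_exit_def u_def)
  then have e: "g (x + \<xi> *\<^sub>R \<theta>) \<bullet> \<theta> = - dl / rs" using \<xi> rs by (simp add: u0 field_simps)
  have "p \<le> g (x + \<xi> *\<^sub>R \<theta>) \<bullet> \<theta> + C2 * \<omega> \<xi>" using g_close[of \<xi>] \<xi> by auto
  also have "\<omega> \<xi> \<le> \<omega> rs" using \<xi> by (intro wmono') auto
  finally show ?thesis using e C2 by (smt (verit) mult_left_mono)
qed

lemma post_exit: assumes "is_exit rs" "rs \<le> r" shows "u r \<le> (r - rs) * max 0 (p + C2 * \<omega> r)"
proof (cases "x + r *\<^sub>R \<theta> \<in> D")
  case False
  then have "u r = 0" using dd_out by (simp add: u_def)
  then show ?thesis using assms by simp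
next
  case True
  have rsD: "x + rs *\<^sub>R \<theta> \<notin> D" using assms by (auto simp: is_exit_def)
  obtain r1 where r1: "rs \<le> r1" "r1 < r" "x + r1 *\<^sub>R \<theta> \<notin> D" "\<And>t. r1 < t \<Longrightarrow> t \<le> r \<Longrightarrow> x + t *\<^sub>R \<theta> \<in> D"
    using exit_last[OF assms(2) rsD True] by blast
  obtain \<xi> where \<xi>: "r1 < \<xi>" "\<xi> < r" "x + \<xi> *\<^sub>R \<theta> \<in> D" "u r - u r1 = (r - r1) * (g (x + \<xi> *\<^sub>R \<theta>) \<bullet> \<theta>)"
    using mvt_ray[OF r1(2)] r1(4) by auto
  have "u r1 = 0" using r1 dd_out by (simp add: u_def)
  have rs0: "0 < rs" using assms by (auto simp: is_exit_def)
  have "g (x + \<xi> *\<^sub>R \<theta>) \<bullet> \<theta> \<le> p + C2 * \<omega> \<xi>" using g_close[of \<xi>] \<xi> r1 rs0 by auto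
  also have "\<omega> \<xi> \<le> \<omega> r" using \<xi> r1 rs0 by (intro wmono') auto
  finally have "g (x + \<xi> *\<^sub>R \<theta>) \<bullet> \<theta> \<le> p + C2 * \<omega> r" using C2 by (smt (verit) mult_left_mono)
  then have "u r \<le> (r - r1) * max 0 (p + C2 * \<omega> r)"
    using \<xi> \<open>u r1 = 0\<close> r1 by (smt (verit) mult_left_mono)
  also have "\<dots> \<le> (r - rs) * max 0 (p + C2 * \<omega> r)"
    using r1 by (intro mult_right_mono) auto
  finally show ?thesis .
qed

lemma num_univ:
  assumes "0 < r" "0 < s" "s < 1"
  shows "\<bar>u r powr s - posp (l r) powr s\<bar> \<le> (3 * C2 * r * \<omega> r) powr s"
proof -
  have wr0: "0 \<le> \<omega> r" using wnn assms by auto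
  have nn: "0 \<le> C2 * r * \<omega> r" using C2 assms wr0 by simp
  have pl0: "0 \<le> posp (l r)" by (simp add: posp_def)
  show ?thesis
  proof (cases "\<forall>t. 0 < t \<and> t < r \<longrightarrow> x + t *\<^sub>R \<theta> \<in> D")
    case True
    have fo: "\<bar>u r - l r\<bar> \<le> C2 * r * \<omega> r" using True assms by (intro first_order) auto
    have a1: "\<bar>u r - posp (l r)\<bar> \<le> \<bar>u r - l r\<bar>" using u_nonneg[of r] by (auto simp: posp_def)
    have "\<bar>u r powr s - posp (l r) powr s\<bar> \<le> \<bar>u r - posp (l r)\<bar> powr s"
      using u_nonneg[of r] pl0 assms by (intro powr_diff_sub) auto
    also have "\<dots> \<le> (3 * C2 * r * \<omega> r) powr s"
    proof (rule powr_mono2)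
      show "\<bar>u r - posp (l r)\<bar> \<le> 3 * C2 * r * \<omega> r" using fo a1 nn by linarith
    qed (use assms in auto)
    finally show ?thesis .
  next
    case False
    then obtain t1 where t1: "0 < t1" "t1 < r" "x + t1 *\<^sub>R \<theta> \<notin> D" by blast
    have "t1 \<in> {0..r}" using t1 by simp
    moreover have r0: "0 \<le> r" using assms by simp
    ultimately obtain rs where rs: "is_exit rs" "rs \<le> r" "dD D x \<le> rs" using exit_ex[OF r0 _ t1(3)] by blast
    have rs0: "0 < rs" using rs by (auto simp: is_exit_def)
    have wr: "\<omega> rs \<le> \<omega> r" "0 \<le> \<omega> rs" using wmono'[of rs r] rs rs0 wnn by auto
    have cw: "C2 * \<omega> rs \<le> C2 * \<omega> r" using wr C2 by (intro mult_left_mono) auto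
    have "dl / rs > 0" using dl_bounds rs0 by simp
    then have pb: "p \<le> C2 * \<omega> rs" using ex_p[OF rs(1)] by linarith
    have "l r = l rs + (r - rs) * p" by (simp add: l_def algebra_simps)
    also have "\<dots> \<le> C2 * rs * \<omega> rs + (r - rs) * (C2 * \<omega> rs)"
      using ex_l[OF rs(1)] pb rs by (intro add_mono mult_left_mono) auto
    also have "\<dots> \<le> C2 * rs * \<omega> r + (r - rs) * (C2 * \<omega> r)"
    proof (rule add_mono)
      show "C2 * rs * \<omega> rs \<le> C2 * rs * \<omega> r" by (rule mult_left_mono[OF wr(1)]) (use C2 rs0 in simp)
      show "(r - rs) * (C2 * \<omega> rs) \<le> (r - rs) * (C2 * \<omega> r)" by (rule mult_left_mono[OF cw]) (use rs in simp)
    qed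
    also have "\<dots> = C2 * r * \<omega> r" by (simp add: algebra_simps)
    finally have lb: "l r \<le> C2 * r * \<omega> r" .
    have "p + C2 * \<omega> r \<le> 2 * C2 * \<omega> r" using pb cw by linarith
    moreover have "0 \<le> 2 * C2 * \<omega> r" using C2 wr0 by simp
    ultimately have mx: "max 0 (p + C2 * \<omega> r) \<le> 2 * C2 * \<omega> r" by simp
    have "u r \<le> (r - rs) * max 0 (p + C2 * \<omega> r)" by (rule post_exit[OF rs(1,2)])
    also have "\<dots> \<le> r * (2 * C2 * \<omega> r)"
      by (rule mult_mono) (use mx rs0 assms in auto)
    finally have ub: "u r \<le> 2 * C2 * r * \<omega> r" by (simp add: mult_ac)
    have "posp (l r) \<le> 3 * C2 * r * \<omega> r" using lb nn by (simp add: posp_def)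
    moreover have "u r \<le> 3 * C2 * r * \<omega> r" using ub nn by simp
    ultimately show ?thesis using powr_diff_max[OF u_nonneg pl0 _ _ assms(2)] by blast
  qed
qed

lemma num_first:
  assumes "0 < r" "0 < s" "s < 1" "\<And>t. 0 < t \<Longrightarrow> t < r \<Longrightarrow> x + t *\<^sub>R \<theta> \<in> D"
    "l r \<noteq> 0" "\<omega> r \<le> w"
  shows "\<bar>u r powr s - posp (l r) powr s\<bar> \<le> C2 * w * r * \<bar>l r\<bar> powr (s - 1)"
proof -
  have fo: "\<bar>u r - l r\<bar> \<le> C2 * r * \<omega> r" using assms by (intro first_order) auto
  also have "\<dots> \<le> C2 * r * w" by (rule mult_left_mono[OF assms(6)]) (use C2 assms(1) in simp)
  also have "\<dots> = C2 * w * r" by (simp add: mult_ac)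
  finally have "\<bar>u r - l r\<bar> \<le> C2 * w * r" .
  then show ?thesis by (rule powr_diff_first[OF u_nonneg[of r] _ assms(5) assms(2) assms(3)])
qed

lemma num_post:
  assumes "is_exit rs" "rs \<le> r" "0 < s" "s < 1" "4 * C2 * \<omega> r * rs \<le> dl"
  shows "\<bar>u r powr s - posp (l r) powr s\<bar> \<le>
     (if r \<le> rs + 2 * rs * (C2 * rs * \<omega> rs) / dl then (C2 * rs * \<omega> rs) powr s else 0)"
proof -
  have rs0: "0 < rs" using assms by (auto simp: is_exit_def)
  have dl0: "0 < dl" using dl_bounds by simp
  have wr: "\<omega> rs \<le> \<omega> r" "0 \<le> \<omega> rs" using wmono'[of rs r] assms(2) rs0 wnn by auto
  have "C2 * \<omega> r * (4 * rs) \<le> dl" using assms(5) by (simp add: mult_ac)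
  then have qa: "C2 * \<omega> r \<le> dl / (4 * rs)" using rs0 by (simp add: pos_le_divide_eq)
  have cw: "C2 * \<omega> rs \<le> C2 * \<omega> r" by (rule mult_left_mono[OF wr(1)]) (use C2 in simp)
  have pb: "p \<le> - dl / rs + C2 * \<omega> rs" by (rule ex_p[OF assms(1)])
  define X where "X = dl / rs"
  have X0: "X > 0" using dl0 rs0 by (simp add: X_def)
  have qa': "C2 * \<omega> r \<le> X / 4" using qa by (simp add: X_def)
  have pb': "p \<le> - X + C2 * \<omega> rs" using pb by (simp add: X_def)
  have "p + C2 * \<omega> r \<le> 0" using pb' qa' cw X0 by linarith
  then have "u r \<le> 0" using post_exit[OF assms(1,2)] by simp
  then have u0: "u r = 0" using u_nonneg[of r] by simp
  define E where "E = C2 * rs * \<omega> rs"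
  have E0: "0 \<le> E" using C2 rs0 wr by (simp add: E_def)
  have p2': "p \<le> - X / 2" using pb' qa' cw X0 by linarith
  then have p2: "p \<le> - (dl / rs) / 2" by (simp add: X_def)
  have lrs: "l rs \<le> E" using ex_l[OF assms(1)] by (simp add: E_def)
  have m: "(r - rs) * p \<le> (r - rs) * (- (dl / rs) / 2)" by (rule mult_left_mono[OF p2]) (use assms(2) in simp)
  have "l r = l rs + (r - rs) * p" by (simp add: l_def algebra_simps)
  also have "\<dots> \<le> E + (r - rs) * (- (dl / rs) / 2)" using lrs m by linarith
  also have "(r - rs) * (- (dl / rs) / 2) = - ((r - rs) * dl / (2 * rs))" by simp
  finally have lb: "l r \<le> E - (r - rs) * dl / (2 * rs)" by simp
  have tnn: "0 \<le> (r - rs) * dl / (2 * rs)" using assms(2) dl0 rs0 by simp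
  show ?thesis
  proof (cases "r \<le> rs + 2 * rs * E / dl")
    case True
    have "posp (l r) \<le> E" using lb E0 tnn by (simp add: posp_def)
    then have "posp (l r) powr s \<le> E powr s" using assms by (intro powr_mono2) (auto simp: posp_def)
    then show ?thesis using True u0 assms by (simp add: E_def[symmetric] posp_def)
  next
    case False
    then have "2 * rs * E / dl < r - rs" by simp
    then have "2 * rs * E < (r - rs) * dl" using dl0 by (simp add: pos_divide_less_eq)
    then have "E < (r - rs) * dl / (2 * rs)" using rs0 by (simp add: pos_less_divide_eq mult_ac)
    then have "posp (l r) = 0" using lb by (simp add: posp_def)
    then show ?thesis using False u0 by (simp add: E_def[symmetric])
  qed
qed

end


lemma integral_split_le:
  fixes F :: "real \<Rightarrow> real"
  assumes cont: "continuous_on {0<..} F" and nn: "\<And>r. 0 < r \<Longrightarrow> 0 \<le> F r"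
    and "0 < a" "0 < m"
  shows "integral {a..b} F \<le> integral {a..m} F + integral {m..b} F"
proof -
  have int: "F integrable_on {c..e}" if "0 < c" for c e
    by (rule integrable_continuous_real) (rule continuous_on_subset[OF cont], use that in auto)
  have inn: "0 \<le> integral {c..e} F" if "0 < c" for c e
    by (rule integral_nonneg[OF int[OF that]]) (use that nn in auto)
  show ?thesis
  proof (cases "m < a")
    case True
    then have "integral {a..b} F \<le> integral {m..b} F"
      by (intro integral_subset_le int) (use assms True in auto)
    moreover have "integral {a..m} F = 0" using True by simp
    ultimately show ?thesis by simp
  next
    case False
    show ?thesis
    proof (cases "b < m")
      case True
      then have "integral {a..b} F \<le> integral {a..m} F"
        by (intro integral_subset_le int) (use assms True in auto)
      moreover have "integral {m..b} F = 0" using True by simp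
      ultimately show ?thesis by simp
    next
      case False
      with \<open>\<not> m < a\<close> have "integral {a..m} F + integral {m..b} F = integral {a..b} F"
        by (intro Henstock_Kurzweil_Integration.integral_combine int) (use assms in auto)
      then show ?thesis by simp
    qed
  qed
qed

lemma integral_le_has:
  fixes F G :: "real \<Rightarrow> real"
  assumes cont: "continuous_on {a..b} F" and G: "(G has_integral I) {a..b}"
    and le: "\<And>r. r \<in> {a..b} \<Longrightarrow> r \<noteq> c \<Longrightarrow> F r \<le> G r"
  shows "integral {a..b} F \<le> I"
proof -
  have G': "((G(c := F c)) has_integral I) {a..b}"
    by (rule has_integral_spike_finite[OF _ _ G, of "{c}"]) auto
  have "integral {a..b} F \<le> integral {a..b} (G(c := F c))"
    by (rule integral_le[OF integrable_continuous_real[OF cont] has_integral_integrable[OF G']])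
       (use le in auto)
  then show ?thesis using G' by (simp add: integral_unique)
qed

lemma integral_mono_dom:
  fixes F :: "real \<Rightarrow> real"
  assumes cont: "continuous_on {0<..} F" and nn: "\<And>r. 0 < r \<Longrightarrow> 0 \<le> F r"
    and "0 < a'" "a' \<le> a" "b \<le> b'"
  shows "integral {a..b} F \<le> integral {a'..b'} F"
proof -
  have int: "F integrable_on {c..e}" if "0 < c" for c e
    by (rule integrable_continuous_real) (rule continuous_on_subset[OF cont], use that in auto)
  show ?thesis by (intro integral_subset_le int) (use assms in auto)
qed


context ray begin

definition "F s r = \<bar>u r powr s - posp (l r) powr s\<bar> / r powr (1 + 2 * s)"

lemma posp_cont: "continuous_on S (\<lambda>r. posp (l r))"
  unfolding posp_def l_def by (intro continuous_intros)

lemma F_cont: assumes "0 < s" shows "continuous_on {0<..} (F s)"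
proof -
  have c1: "continuous_on {0<..} (\<lambda>r. u r powr s)"
    by (rule continuous_on_powr'[OF u_cont continuous_on_const]) (use u_nonneg assms in auto)
  have c2: "continuous_on {0<..} (\<lambda>r. posp (l r) powr s)"
    by (rule continuous_on_powr'[OF posp_cont continuous_on_const]) (use assms in \<open>auto simp: posp_def\<close>)
  have c3: "continuous_on {0<..} (\<lambda>r::real. r powr (1 + 2 * s))"
    by (rule continuous_on_powr'[OF continuous_on_id continuous_on_const]) (use assms in auto)
  show ?thesis unfolding F_def
    by (intro continuous_on_divide continuous_on_rabs continuous_on_diff c1 c2 c3) auto
qed

lemma F_nn: "0 \<le> F s r" by (simp add: F_def)

lemma F_univ: assumes "0 < r" "0 < s" "s < 1"
  shows "F s r \<le> (3 * C2 * r * \<omega> r) powr s / r powr (1 + 2 * s)"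
  unfolding F_def by (rule divide_right_mono[OF num_univ[OF assms]]) simp

lemma region3:
  assumes s: "0 < s" "s < 1" and io: "0 < \<iota>" "\<iota> < 1" and Y: "0 < Y" "Y \<le> X" and W: "0 \<le> W"
    and hw: "\<And>r. Y \<le> r \<Longrightarrow> r \<le> R \<Longrightarrow> \<omega> r \<le> W * (r / Y) powr \<iota>"
  shows "integral {X..R} (F s) \<le> (3 * C2) powr s * W powr s * Y powr (- s) / (s * (1 - \<iota>))"
proof -
  have rhs0: "0 \<le> (3 * C2) powr s * W powr s * Y powr (- s) / (s * (1 - \<iota>))" using s io by simp
  show ?thesis
  proof (cases "X \<le> R")
    case False
    then show ?thesis using rhs0 by simp
  next
    case True
    define c where "c = (3 * C2) powr s * W powr s * Y powr (- (\<iota> * s))"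
    define \<gamma> where "\<gamma> = \<iota> * s - 1 - s"
    have g1: "\<gamma> + 1 = - (s * (1 - \<iota>))" by (simp add: \<gamma>_def algebra_simps)
    have gne: "\<gamma> \<noteq> -1" using g1 s io by auto
    have X0: "0 < X" using Y by simp
    have Gi: "((\<lambda>r. c * r powr \<gamma>) has_integral c * ((R powr (\<gamma>+1) - X powr (\<gamma>+1)) / (\<gamma>+1))) {X..R}"
      using has_integral_mult_right[OF powr_has_integral[OF X0 True gne], of c] by simp
    have le: "F s r \<le> c * r powr \<gamma>" if r: "r \<in> {X..R}" for r
    proof -
      have r0: "0 < r" using r Y by auto
      have "F s r \<le> (3 * C2 * r * \<omega> r) powr s / r powr (1 + 2 * s)" by (rule F_univ[OF r0 s])
      also have "\<dots> \<le> (3 * C2 * r * (W * (r / Y) powr \<iota>)) powr s / r powr (1 + 2 * s)"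
      proof (intro divide_right_mono powr_mono2)
        show "0 \<le> 3 * C2 * r * \<omega> r" using C2 r0 wnn by simp
        show "3 * C2 * r * \<omega> r \<le> 3 * C2 * r * (W * (r / Y) powr \<iota>)"
          using hw[of r] r Y C2 r0 by (intro mult_left_mono) auto
      qed (use s in auto)
      also have "(3 * C2 * r * (W * (r / Y) powr \<iota>)) powr s = (3 * C2) powr s * W powr s * (r powr s * (r / Y) powr (\<iota> * s))"
        using r0 Y C2 W by (simp add: powr_mult powr_powr mult_ac)
      also have "(r / Y) powr (\<iota> * s) = r powr (\<iota> * s) * Y powr (- (\<iota> * s))"
        using r0 Y by (simp add: powr_divide powr_minus_divide)
      also have "(3 * C2) powr s * W powr s * (r powr s * (r powr (\<iota> * s) * Y powr (- (\<iota> * s)))) / r powr (1 + 2 * s)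
          = c * ((r powr s * r powr (\<iota> * s)) / r powr (1 + 2 * s))"
        by (simp add: c_def)
      also have "(r powr s * r powr (\<iota> * s)) / r powr (1 + 2 * s) = r powr \<gamma>"
      proof -
        have "r powr s * r powr (\<iota> * s) = r powr (s + \<iota> * s)" by (simp add: powr_add)
        moreover have "r powr (s + \<iota> * s) / r powr (1 + 2 * s) = r powr (s + \<iota> * s - (1 + 2 * s))"
          by (rule powr_diff[symmetric])
        moreover have "s + \<iota> * s - (1 + 2 * s) = \<gamma>" by (simp add: \<gamma>_def)
        ultimately show ?thesis by simp
      qed
      finally show ?thesis .
    qed
    have "integral {X..R} (F s) \<le> c * ((R powr (\<gamma>+1) - X powr (\<gamma>+1)) / (\<gamma>+1))"
      by (rule integral_le_has[OF continuous_on_subset[OF F_cont[OF s(1)]] Gi, of X]) (use le X0 in auto)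
    also have "\<dots> \<le> c * (X powr (\<gamma>+1) / (s * (1 - \<iota>)))"
    proof (rule mult_left_mono)
      show "0 \<le> c" by (simp add: c_def)
      have "(R powr (\<gamma>+1) - X powr (\<gamma>+1)) / (\<gamma>+1) = (X powr (\<gamma>+1) - R powr (\<gamma>+1)) / (s * (1 - \<iota>))"
        using g1 by (simp add: divide_simps)
      also have "\<dots> \<le> X powr (\<gamma>+1) / (s * (1 - \<iota>))" using s io by (intro divide_right_mono) auto
      finally show "(R powr (\<gamma>+1) - X powr (\<gamma>+1)) / (\<gamma>+1) \<le> X powr (\<gamma>+1) / (s * (1 - \<iota>))" .
    qed
    also have "\<dots> \<le> c * (Y powr (\<gamma>+1) / (s * (1 - \<iota>)))"
    proof (intro mult_left_mono divide_right_mono)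
      show "X powr (\<gamma>+1) \<le> Y powr (\<gamma>+1)" using g1 s io Y by (intro powr_mono2') auto
    qed (use s io in \<open>auto simp: c_def\<close>)
    also have "\<dots> = (3 * C2) powr s * W powr s * Y powr (- s) / (s * (1 - \<iota>))"
    proof -
      have "1 + \<gamma> - \<iota> * s = - s" by (simp add: \<gamma>_def)
      then have e: "Y powr (1 + \<gamma> - \<iota> * s) = Y powr (- s)" by simp
      show ?thesis using Y e by (simp add: c_def g1 powr_add[symmetric] algebra_simps)
    qed
    finally show ?thesis .
  qed
qed

end


context ray begin

lemma region2:
  assumes s: "0 < s" "s < 1" and rs: "is_exit rs"
    and hb: "\<And>r. rs \<le> r \<Longrightarrow> r \<le> b \<Longrightarrow> 4 * C2 * \<omega> r * rs \<le> dl"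
  shows "integral {rs..b} (F s) \<le> 2 * rs * (C2 * rs * \<omega> rs) / dl * ((C2 * rs * \<omega> rs) powr s / rs powr (1 + 2 * s))"
proof -
  define E where "E = C2 * rs * \<omega> rs"
  define lam where "lam = 2 * rs * E / dl"
  define K where "K = E powr s / rs powr (1 + 2 * s)"
  have rs0: "0 < rs" using rs by (auto simp: is_exit_def)
  have dl0: "0 < dl" using dl_bounds by simp
  have E0: "0 \<le> E" using C2 rs0 wnn by (simp add: E_def)
  have lam0: "0 \<le> lam" using E0 rs0 dl0 by (simp add: lam_def)
  have K0: "0 \<le> K" by (simp add: K_def)
  define m where "m = min (rs + lam) b"
  show ?thesis
  proof (cases "rs \<le> b")
    case False
    then have "integral {rs..b} (F s) = 0" by simp
    then show ?thesis using lam0 K0 by (simp add: lam_def[symmetric] K_def[symmetric] E_def[symmetric])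
  next
    case True
    have m0: "0 < m" "rs \<le> m" "m \<le> b" "m \<le> rs + lam" using True rs0 lam0 by (auto simp: m_def)
    have split: "integral {rs..b} (F s) \<le> integral {rs..m} (F s) + integral {m..b} (F s)"
      by (rule integral_split_le[OF F_cont[OF s(1)] F_nn rs0 m0(1)])
    have I1: "integral {rs..m} (F s) \<le> (m - rs) * K"
    proof (rule integral_le_has[OF continuous_on_subset[OF F_cont[OF s(1)]], of _ _ "\<lambda>r. K"])
      show "{rs..m} \<subseteq> {0<..}" using rs0 by auto
      show "((\<lambda>r. K) has_integral (m - rs) * K) {rs..m}"
        using has_integral_const_real[of K rs m] m0 by simp
      fix r assume r: "r \<in> {rs..m}"
      have r0: "0 < r" using r rs0 by auto
      have "\<bar>u r powr s - posp (l r) powr s\<bar> \<le> (if r \<le> rs + 2 * rs * E / dl then E powr s else 0)"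
        unfolding E_def by (rule num_post[OF rs _ s hb[of r]]) (use r m0 in auto)
      also have "\<dots> = E powr s" using r m0 by (simp add: lam_def)
      finally have "F s r \<le> E powr s / r powr (1 + 2 * s)" unfolding F_def
        by (rule divide_right_mono) simp
      also have "\<dots> \<le> K" unfolding K_def
        using r rs0 s by (intro divide_left_mono powr_mono2 mult_pos_pos) auto
      finally show "F s r \<le> K" .
    qed
    have I2: "integral {m..b} (F s) \<le> 0"
    proof (rule integral_le_has[OF continuous_on_subset[OF F_cont[OF s(1)]], of _ _ "\<lambda>r. 0" _ m])
      show "{m..b} \<subseteq> {0<..}" using m0 by auto
      show "((\<lambda>r. 0) has_integral 0) {m..b}" by simp
      fix r assume r: "r \<in> {m..b}" "r \<noteq> m"
      then have "m < r" by auto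
      then have "rs + lam < r" using r by (auto simp: m_def)
      have "\<bar>u r powr s - posp (l r) powr s\<bar> \<le> (if r \<le> rs + 2 * rs * E / dl then E powr s else 0)"
        unfolding E_def by (rule num_post[OF rs _ s hb[of r]]) (use r m0 in auto)
      also have "\<dots> = 0" using \<open>rs + lam < r\<close> by (simp add: lam_def)
      finally show "F s r \<le> 0" by (simp add: F_def)
    qed
    have "(m - rs) * K \<le> lam * K" using m0 K0 by (intro mult_right_mono) auto
    then show ?thesis using split I1 I2 by (simp add: lam_def K_def E_def)
  qed
qed

end


lemma powr_1_minus: fixes B c :: real assumes "0 < B" shows "B powr (1 - c) = B * B powr (- c)"
proof -
  have "B powr (1 + (- c)) = B powr 1 * B powr (- c)" by (rule powr_add)
  then show ?thesis using assms by simp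
qed

lemma r0_Q:
  fixes A B r0 s :: real
  assumes "0 < A" "2 * A \<le> B" "2 * A / 3 \<le> r0" "r0 \<le> 2 * B" "0 < s" "s < 1"
  shows "r0 powr (1 - 2 * s) \<le> 6 * Q s A B"
proof (cases "s \<le> 1/2")
  case True
  have B0: "0 < B" using assms by simp
  have r00: "0 < r0" using assms by simp
  have "r0 powr (1 - 2 * s) \<le> (2 * B) powr (1 - 2 * s)" using True assms r00 by (intro powr_mono2) auto
  also have "\<dots> = 2 powr (1 - 2 * s) * B powr (1 - 2 * s)" using B0 by (simp add: powr_mult)
  also have "2 powr (1 - 2 * s) \<le> 2 powr 1" using True assms by (intro powr_mono) auto
  then have "2 powr (1 - 2 * s) * B powr (1 - 2 * s) \<le> 2 * B powr (1 - 2 * s)"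
    by (intro mult_right_mono) auto
  also have "B powr (1 - 2 * s) = 2 * ((B - B/2) * B powr (- 2 * s))"
    using powr_1_minus[OF B0, of "2 * s"] by simp
  also have "(B - B/2) * B powr (- 2 * s) \<le> Q s (B/2) B" using B0 assms by (intro Q_lower) auto
  also have "Q s (B/2) B \<le> Q s A B" using assms by (intro Q_mono) auto
  finally have "r0 powr (1 - 2 * s) \<le> 4 * Q s A B" by simp
  moreover have "0 \<le> Q s A B" using assms by (intro Q_nonneg) auto
  ultimately show ?thesis by simp
next
  case False
  have r00: "0 < r0" using assms by simp
  have "r0 powr (1 - 2 * s) \<le> (2 * A / 3) powr (1 - 2 * s)" using False assms by (intro powr_mono2') auto
  also have "\<dots> = (2/3) powr (1 - 2 * s) * A powr (1 - 2 * s)" using assms by (simp add: powr_mult powr_divide)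
  also have "(2/3::real) powr (1 - 2 * s) \<le> (2/3) powr (-1)" using False assms by (intro powr_mono') auto
  then have "(2/3) powr (1 - 2 * s) * A powr (1 - 2 * s) \<le> (3/2) * A powr (1 - 2 * s)"
    by (intro mult_right_mono) (auto simp: powr_minus_divide)
  also have "A powr (1 - 2 * s) = 2 powr (2 * s) * ((2 * A - A) * (2 * A) powr (- 2 * s))"
  proof -
    have "(2 * A) powr (- 2 * s) = 2 powr (- 2 * s) * A powr (- 2 * s)" using assms by (simp add: powr_mult)
    moreover have "2 powr (2 * s) * 2 powr (- 2 * s) = (1::real)" by (simp add: powr_add[symmetric])
    moreover have "A powr (1 - 2 * s) = A * A powr (- 2 * s)" using powr_1_minus[OF assms(1), of "2 * s"] by simp
    ultimately show ?thesis by (simp add: algebra_simps)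
  qed
  also have "2 powr (2 * s) \<le> (2::real) powr 2" using assms by (intro powr_mono) auto
  then have "2 powr (2 * s) * ((2 * A - A) * (2 * A) powr (- 2 * s)) \<le> 4 * ((2 * A - A) * (2 * A) powr (- 2 * s))"
    using assms by (intro mult_right_mono) auto
  also have "(2 * A - A) * (2 * A) powr (- 2 * s) \<le> Q s A (2 * A)" using assms by (intro Q_lower) auto
  also have "Q s A (2 * A) \<le> Q s A B" using assms by (intro Q_mono) auto
  finally show ?thesis using assms by simp
qed


context ray begin

lemma pw1:
  assumes s: "0 < s" "s < 1" and r0: "0 < r" and fo: "\<And>t. 0 < t \<Longrightarrow> t < r \<Longrightarrow> x + t *\<^sub>R \<theta> \<in> D"
    and lr: "l r \<noteq> 0" and hw: "\<omega> r \<le> w"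
  shows "F s r \<le> C2 * w * (r powr (- 2 * s) * \<bar>l r\<bar> powr (s - 1))"
proof -
  have "F s r \<le> C2 * w * r * \<bar>l r\<bar> powr (s - 1) / r powr (1 + 2 * s)"
    unfolding F_def by (rule divide_right_mono[OF num_first[OF r0 s fo lr hw]]) (use powr_ge_zero in auto)
  also have "r / r powr (1 + 2 * s) = r powr (- 2 * s)"
  proof -
    have "r powr (1 - (1 + 2 * s)) = r powr 1 / r powr (1 + 2 * s)" by (rule powr_diff)
    then show ?thesis using r0 by simp
  qed
  then have "C2 * w * r * \<bar>l r\<bar> powr (s - 1) / r powr (1 + 2 * s) = C2 * w * (r powr (- 2 * s) * \<bar>l r\<bar> powr (s - 1))"
    by (metis (no_types, lifting) mult.commute mult.left_commute times_divide_eq_right)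
  finally show ?thesis .
qed

lemma Kb_calc:
  fixes r0 q s :: real
  assumes "0 < r0" "0 < q" "q * r0 = dl'" "0 < s" "s < 1" "0 < dl'"
  shows "(r0/2) powr (- 2 * s) * q powr (s - 1) * (2 * (r0/2) powr s / s) \<le> 4 * r0 powr (1 - 2 * s) * dl' powr (s - 1) / s"
proof -
  have e1: "(r0/2) powr (- 2 * s) * (r0/2) powr s = (r0/2) powr (- s)"
    by (simp add: powr_add[symmetric])
  have e2: "(r0/2) powr (- s) = r0 powr (- s) * 2 powr s"
    using assms by (simp add: powr_divide powr_minus_divide)
  have qd: "q = dl' / r0" using assms by (simp add: field_simps)
  have e3: "q powr (s - 1) = dl' powr (s - 1) * r0 powr (1 - s)"
  proof -
    have "q powr (s - 1) = dl' powr (s - 1) / r0 powr (s - 1)" using qd assms by (simp add: powr_divide)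
    moreover have "r0 powr (1 - s) = 1 / r0 powr (s - 1)" using assms
      by (metis minus_diff_eq powr_minus_divide)
    ultimately show ?thesis by simp
  qed
  have e4: "r0 powr (- s) * r0 powr (1 - s) = r0 powr (1 - 2 * s)" by (simp add: powr_add[symmetric])
  have "(r0/2) powr (- 2 * s) * q powr (s - 1) * (2 * (r0/2) powr s / s)
      = 2 * ((r0/2) powr (- 2 * s) * (r0/2) powr s) * q powr (s - 1) / s" by (simp add: field_simps)
  also have "\<dots> = 2 * 2 powr s * (r0 powr (- s) * r0 powr (1 - s)) * dl' powr (s - 1) / s"
    by (simp only: e1 e2 e3) (simp add: field_simps)
  also have "\<dots> = 2 * 2 powr s * r0 powr (1 - 2 * s) * dl' powr (s - 1) / s" by (simp only: e4)
  also have "\<dots> \<le> 2 * 2 * r0 powr (1 - 2 * s) * dl' powr (s - 1) / s"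
  proof -
    have "2 powr s \<le> (2::real) powr 1" using assms by (intro powr_mono) auto
    then have "2 powr s \<le> (2::real)" by simp
    then show ?thesis using assms
      by (intro divide_right_mono mult_right_mono) auto
  qed
  finally show ?thesis by simp
qed

lemma region1:
  assumes s: "0 < s" "s < 1" and A: "0 < A" "2 * A \<le> B" "m \<le> B"
    and fo: "\<And>t. 0 < t \<Longrightarrow> t < m \<Longrightarrow> x + t *\<^sub>R \<theta> \<in> D"
    and hw: "\<And>r. 0 \<le> r \<Longrightarrow> r \<le> m \<Longrightarrow> \<omega> r \<le> w" and w0: "0 \<le> w"
  shows "integral {A..m} (F s) \<le> C2 * w * dl powr (s - 1) * (26 / s) * Q s A B"
proof -
  define cc where "cc = C2 * w"
  have cc0: "0 \<le> cc" using C2 w0 by (simp add: cc_def)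
  have dl0: "0 < dl" using dl_bounds by simp
  have QB0: "0 \<le> Q s A B" using A by (intro Q_nonneg) auto
  have rhs0: "0 \<le> C2 * w * dl powr (s - 1) * (26 / s) * Q s A B" using cc0 QB0 s by (simp add: cc_def)
  have s26: "1 \<le> 26 / s" using s by simp
  show ?thesis
  proof (cases "A \<le> m")
    case False
    then show ?thesis using rhs0 by simp
  next
    case True
    have QmB: "Q s A m \<le> Q s A B" using A True by (intro Q_mono) auto
    have contF: "continuous_on {A..m} (F s)" by (rule continuous_on_subset[OF F_cont[OF s(1)]]) (use A in auto)
    have pw: "F s r \<le> cc * (r powr (- 2 * s) * \<bar>l r\<bar> powr (s - 1))" if r: "r \<in> {A..m}" "l r \<noteq> 0" for r
      unfolding cc_def by (rule pw1[OF s]) (use r A fo hw in auto)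
    have Qi: "((\<lambda>r. r powr (- 2 * s)) has_integral Q s A m) {A..m}" by (rule Q_has_integral) (use A True in auto)
    show ?thesis
    proof (cases "0 \<le> p")
      case True
      have G: "((\<lambda>r. cc * dl powr (s - 1) * r powr (- 2 * s)) has_integral cc * dl powr (s - 1) * Q s A m) {A..m}"
        using has_integral_mult_right[OF Qi, of "cc * dl powr (s - 1)"] by simp
      have "integral {A..m} (F s) \<le> cc * dl powr (s - 1) * Q s A m"
      proof (rule integral_le_has[OF contF G, of 0])
        fix r assume r: "r \<in> {A..m}"
        have r0: "0 < r" using r A by auto
        have lr: "dl \<le> l r" using True r0 by (simp add: l_def)
        then have lr0: "l r \<noteq> 0" using dl0 by auto
        have "\<bar>l r\<bar> powr (s - 1) \<le> dl powr (s - 1)" using lr dl0 s by (intro powr_mono2') auto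
        then have "cc * (r powr (- 2 * s) * \<bar>l r\<bar> powr (s - 1)) \<le> cc * (r powr (- 2 * s) * dl powr (s - 1))"
          using cc0 by (intro mult_left_mono) auto
        then show "F s r \<le> cc * dl powr (s - 1) * r powr (- 2 * s)" using pw[OF r lr0] by (simp add: mult_ac)
      qed
      also have "\<dots> \<le> cc * dl powr (s - 1) * Q s A B" using QmB cc0 by (intro mult_left_mono) auto
      also have "\<dots> \<le> cc * dl powr (s - 1) * ((26 / s) * Q s A B)"
      proof (rule mult_left_mono)
        show "Q s A B \<le> 26 / s * Q s A B" using mult_right_mono[OF s26 QB0] by simp
      qed (use cc0 in simp)
      finally show ?thesis by (simp add: cc_def mult_ac)
    next
      case False
      define q where "q = - p"
      have q0: "0 < q" using False by (simp add: q_def)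
      define r0 where "r0 = dl / q"
      have r00: "0 < r0" using q0 dl0 by (simp add: r0_def)
      have qr0: "q * r0 = dl" using q0 by (simp add: r0_def)
      define h where "h = r0 / 2"
      have h0: "0 < h" using r00 by (simp add: h_def)
      define Kb where "Kb = (r0/2) powr (- 2 * s) * q powr (s - 1)"
      have Kb0: "0 \<le> Kb" by (simp add: Kb_def)
      define f1 where "f1 r = Kb * \<bar>r - r0\<bar> powr (s - 1)" for r
      have f1full: "(f1 has_integral Kb * (2 * h powr s / s)) {r0-h..r0+h}"
        unfolding f1_def by (rule has_integral_mult_right[OF abs_powr_has_integral[OF h0 s(1)]])
      define J where "J = {max A (r0-h)..min m (r0+h)}"
      have JS: "J \<subseteq> {r0-h..r0+h}" by (auto simp: J_def)
      have f1J: "f1 integrable_on J" unfolding J_def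
        by (rule integrable_on_subinterval[OF has_integral_integrable[OF f1full]]) (auto)
      define IH where "IH = integral J f1"
      have HI: "((\<lambda>r. if r \<in> {r0-h..r0+h} then f1 r else 0) has_integral IH) {A..m}"
      proof -
        have "(f1 has_integral IH) J" using f1J by (simp add: IH_def integrable_integral)
        moreover have "J = {r0-h..r0+h} \<inter> {A..m}" by (auto simp: J_def)
        ultimately have "(f1 has_integral IH) ({r0-h..r0+h} \<inter> {A..m})" by simp
        then show ?thesis by (simp only: has_integral_restrict_Int)
      qed
      have G: "((\<lambda>r. cc * (2 * dl powr (s - 1)) * r powr (- 2 * s) + cc * (if r \<in> {r0-h..r0+h} then f1 r else 0))
          has_integral cc * (2 * dl powr (s - 1)) * Q s A m + cc * IH) {A..m}"
        by (intro has_integral_add has_integral_mult_right Qi HI)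
      have lform: "l r = q * (r0 - r)" for r using qr0 by (simp add: l_def q_def algebra_simps)
      have "integral {A..m} (F s) \<le> cc * (2 * dl powr (s - 1)) * Q s A m + cc * IH"
      proof (rule integral_le_has[OF contF G, of r0])
        fix r assume r: "r \<in> {A..m}" "r \<noteq> r0"
        have r0': "0 < r" using r A by auto
        have lr0: "l r \<noteq> 0" using r q0 by (simp add: lform)
        have absl: "\<bar>l r\<bar> = q * \<bar>r - r0\<bar>" using q0 by (simp add: lform abs_mult abs_minus_commute)
        have F1: "F s r \<le> cc * (r powr (- 2 * s) * \<bar>l r\<bar> powr (s - 1))" by (rule pw[OF r(1) lr0])
        show "F s r \<le> cc * (2 * dl powr (s - 1)) * r powr (- 2 * s) + cc * (if r \<in> {r0-h..r0+h} then f1 r else 0)"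
        proof (cases "r \<in> {r0-h..r0+h}")
          case True
          have rr: "r0/2 \<le> r" using True by (auto simp: h_def)
          have "r powr (- 2 * s) \<le> (r0/2) powr (- 2 * s)" using rr r00 s by (intro powr_mono2') auto
          moreover have "\<bar>l r\<bar> powr (s - 1) = q powr (s - 1) * \<bar>r - r0\<bar> powr (s - 1)"
            using q0 by (simp add: absl powr_mult)
          ultimately have "r powr (- 2 * s) * \<bar>l r\<bar> powr (s - 1) \<le> f1 r"
          proof -
            assume a1: "r powr (- 2 * s) \<le> (r0/2) powr (- 2 * s)"
              and a2: "\<bar>l r\<bar> powr (s - 1) = q powr (s - 1) * \<bar>r - r0\<bar> powr (s - 1)"
            have "r powr (- 2 * s) * (q powr (s - 1) * \<bar>r - r0\<bar> powr (s - 1))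
                \<le> (r0/2) powr (- 2 * s) * (q powr (s - 1) * \<bar>r - r0\<bar> powr (s - 1))"
              by (rule mult_right_mono[OF a1]) simp
            then show ?thesis unfolding f1_def Kb_def a2 by (simp only: mult_ac)
          qed
          then have "F s r \<le> cc * f1 r" using F1 cc0 by (smt (verit) mult_left_mono)
          moreover have "0 \<le> cc * (2 * dl powr (s - 1)) * r powr (- 2 * s)" using cc0 by simp
          ultimately show ?thesis using True by simp
        next
          case False
          then have "h < \<bar>r - r0\<bar>" by auto
          then have "q * h \<le> \<bar>l r\<bar>" using q0 absl by simp
          moreover have "q * h = dl / 2" using qr0 by (simp add: h_def)
          ultimately have lge: "dl / 2 \<le> \<bar>l r\<bar>" by simp
          have "\<bar>l r\<bar> powr (s - 1) \<le> (dl / 2) powr (s - 1)" using lge dl0 s by (intro powr_mono2') auto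
          also have "(dl / 2) powr (s - 1) = dl powr (s - 1) * 2 powr (1 - s)"
            using dl0 by (simp add: powr_divide) (metis minus_diff_eq powr_minus_divide times_divide_eq_right mult_1_right)
          also have "\<dots> \<le> dl powr (s - 1) * 2"
          proof -
            have "2 powr (1 - s) \<le> (2::real) powr 1" using s by (intro powr_mono) auto
            then show ?thesis by (intro mult_left_mono) auto
          qed
          finally have "\<bar>l r\<bar> powr (s - 1) \<le> 2 * dl powr (s - 1)" by simp
          then have "r powr (- 2 * s) * \<bar>l r\<bar> powr (s - 1) \<le> r powr (- 2 * s) * (2 * dl powr (s - 1))"
            by (intro mult_left_mono) auto
          then have "F s r \<le> cc * (r powr (- 2 * s) * (2 * dl powr (s - 1)))" using F1 cc0
            by (smt (verit) mult_left_mono)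
          moreover have "(if r \<in> {r0-h..r0+h} then f1 r else 0) = 0" using False by (simp only: if_False)
          ultimately show ?thesis by (simp add: mult_ac)
        qed
      qed
      also have "\<dots> \<le> cc * (2 * dl powr (s - 1)) * Q s A B + cc * (24 * dl powr (s - 1) * Q s A B / s)"
      proof (rule add_mono)
        show "cc * (2 * dl powr (s - 1)) * Q s A m \<le> cc * (2 * dl powr (s - 1)) * Q s A B"
          using QmB cc0 by (intro mult_left_mono) auto
        have "IH \<le> 24 * dl powr (s - 1) * Q s A B / s"
        proof (cases "J = {}")
          case True
          then have "IH = 0" by (simp add: IH_def)
          then show ?thesis using QB0 s by simp
        next
          case False
          then have c1: "r0 - h \<le> m" "A \<le> r0 + h" by (auto simp: J_def)
          have "IH \<le> integral {r0-h..r0+h} f1"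
            unfolding IH_def
          proof (rule integral_subset_le[OF JS f1J has_integral_integrable[OF f1full]])
            show "\<forall>x\<in>{r0 - h..r0 + h}. 0 \<le> f1 x" using Kb0 by (simp add: f1_def)
          qed
          also have "\<dots> = Kb * (2 * h powr s / s)" using f1full by (simp add: integral_unique)
          also have "\<dots> \<le> 4 * r0 powr (1 - 2 * s) * dl powr (s - 1) / s"
            unfolding Kb_def h_def by (rule Kb_calc[OF r00 q0 qr0 s dl0])
          also have "\<dots> \<le> 4 * (6 * Q s A B) * dl powr (s - 1) / s"
          proof -
            have "r0 powr (1 - 2 * s) \<le> 6 * Q s A B"
              by (rule r0_Q) (use A c1 s True in \<open>auto simp: h_def\<close>)
            then show ?thesis using s by (intro divide_right_mono mult_right_mono mult_left_mono) auto
          qed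
          finally show ?thesis by (simp add: mult_ac)
        qed
        then show "cc * IH \<le> cc * (24 * dl powr (s - 1) * Q s A B / s)" using cc0 by (intro mult_left_mono)
      qed
      also have "\<dots> = cc * dl powr (s - 1) * (2 + 24 / s) * Q s A B" by (simp add: field_simps)
      also have "\<dots> \<le> cc * dl powr (s - 1) * (26 / s) * Q s A B"
      proof (intro mult_right_mono mult_left_mono QB0)
        show "2 + 24 / s \<le> 26 / s" using s by (simp add: field_simps)
      qed (use cc0 in auto)
      finally show ?thesis by (simp add: cc_def)
    qed
  qed
qed

end


context ray begin

lemma region3':
  assumes s: "0 < s" "s < 1" and io: "0 < \<iota>" "\<iota> < 1" and Y: "0 < Y" and W: "0 \<le> W"
    and YX: "Y \<le> X \<or> R \<le> X"
    and hw: "\<And>r. Y \<le> r \<Longrightarrow> r \<le> R \<Longrightarrow> \<omega> r \<le> W * (r / Y) powr \<iota>"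
  shows "integral {X..R} (F s) \<le> (3 * C2) powr s * W powr s * Y powr (- s) / (s * (1 - \<iota>))"
proof (cases "Y \<le> X")
  case True
  show ?thesis by (rule region3[OF s io Y True W hw])
next
  case False
  then have "R \<le> X" using YX by simp
  then have "integral {X..R} (F s) = 0" by (cases "X = R") auto
  then show ?thesis using s io by simp
qed

lemma region2':
  assumes s: "0 < s" "s < 1" and rs: "is_exit rs" "rs \<le> T" and w: "\<omega> rs \<le> w"
    and hb: "\<And>r. rs \<le> r \<Longrightarrow> r \<le> b \<Longrightarrow> 4 * C2 * \<omega> r * rs \<le> dl"
  shows "integral {rs..b} (F s) \<le> 2 * (C2 * w) powr (1 + s) * T powr (1 - s) / dl"
proof -
  define E where "E = C2 * rs * \<omega> rs"
  have rs0: "0 < rs" using rs by (auto simp: is_exit_def)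
  have dl0: "0 < dl" using dl_bounds by simp
  have E0: "0 \<le> E" using C2 rs0 wnn by (simp add: E_def)
  have Ele: "E \<le> (C2 * w) * rs" unfolding E_def using w C2 rs0 by (simp add: mult_ac)
  have cw0: "0 \<le> C2 * w" using Ele E0 rs0 by (smt (verit) mult_nonneg_nonneg zero_le_mult_iff)
  have i1: "integral {rs..b} (F s) \<le> 2 * rs * E / dl * (E powr s / rs powr (1 + 2 * s))"
    using region2[OF s rs(1) hb] by (simp add: E_def)
  have e1: "2 * rs * E / dl * (E powr s / rs powr (1 + 2 * s)) = 2 * (E * E powr s) * (rs * rs powr (- (1 + 2 * s))) / dl"
  proof -
    have inv: "rs powr (- (1 + 2 * s)) = 1 / rs powr (1 + 2 * s)" by (rule powr_minus_divide)
    show ?thesis by (simp only: inv) (simp add: field_simps)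
  qed
  have e2: "E * E powr s = E powr (1 + s)"
  proof (cases "E = 0")
    case False then show ?thesis using E0 by (simp add: powr_add)
  qed simp
  have e3: "rs * rs powr (- (1 + 2 * s)) = rs powr (- 2 * s)"
  proof -
    have "rs powr (1 + (- (1 + 2 * s))) = rs powr 1 * rs powr (- (1 + 2 * s))" by (rule powr_add)
    then show ?thesis using rs0 by simp
  qed
  have i2: "2 * E powr (1 + s) * rs powr (- 2 * s) / dl \<le> 2 * ((C2 * w) * rs) powr (1 + s) * rs powr (- 2 * s) / dl"
    using E0 Ele s dl0 by (intro divide_right_mono mult_right_mono mult_left_mono powr_mono2) auto
  have e4: "((C2 * w) * rs) powr (1 + s) * rs powr (- 2 * s) = (C2 * w) powr (1 + s) * rs powr (1 - s)"
  proof -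
    have "((C2 * w) * rs) powr (1 + s) = (C2 * w) powr (1 + s) * rs powr (1 + s)"
      using cw0 rs0 by (simp add: powr_mult)
    moreover have "rs powr (1 + s) * rs powr (- 2 * s) = rs powr (1 - s)"
      by (simp add: powr_add[symmetric])
    ultimately show ?thesis by (simp add: mult.assoc)
  qed
  have i3: "2 * ((C2 * w) powr (1 + s) * rs powr (1 - s)) / dl \<le> 2 * ((C2 * w) powr (1 + s) * T powr (1 - s)) / dl"
    using rs rs0 s dl0 by (intro divide_right_mono mult_left_mono powr_mono2) auto
  have "integral {rs..b} (F s) \<le> 2 * E powr (1 + s) * rs powr (- 2 * s) / dl"
    using i1 e1 e2 e3 by simp
  also have "\<dots> \<le> 2 * ((C2 * w) powr (1 + s) * rs powr (1 - s)) / dl" using i2 e4 by (simp add: mult.assoc)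
  also have "\<dots> \<le> 2 * ((C2 * w) powr (1 + s) * T powr (1 - s)) / dl" by (rule i3)
  finally show ?thesis by (simp add: mult_ac)
qed

lemma total:
  assumes s: "0 < s" "s < 1" and io: "0 < \<iota>" "\<iota> < 1" and A0: "0 < A" and AT: "2 * A \<le> T"
    and c: "0 < c" "c \<le> 1" and R0: "0 < R" and w0: "0 \<le> w"
    and wT: "\<And>r. 0 \<le> r \<Longrightarrow> r \<le> T \<Longrightarrow> \<omega> r \<le> w"
    and hY: "\<And>r. c * T \<le> r \<Longrightarrow> r \<le> R \<Longrightarrow> \<omega> r \<le> w * (r / (c * T)) powr \<iota>"
    and hc: "4 * C2 * w * (c * T) \<le> dl"
  shows "integral {A..R} (F s) \<le> C2 * w * dl powr (s - 1) * (26 / s) * Q s A T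
     + 2 * (C2 * w) powr (1 + s) * T powr (1 - s) / dl
     + (3 * C2) powr s * w powr s * (c * T) powr (- s) / (s * (1 - \<iota>))"
proof -
  define B1 where "B1 = C2 * w * dl powr (s - 1) * (26 / s) * Q s A T"
  define B2 where "B2 = 2 * (C2 * w) powr (1 + s) * T powr (1 - s) / dl"
  define B3 where "B3 = (3 * C2) powr s * w powr s * (c * T) powr (- s) / (s * (1 - \<iota>))"
  have T0: "0 < T" using A0 AT by simp
  have cT0: "0 < c * T" using c T0 by simp
  have cTT: "c * T \<le> T" using c T0 by simp
  have dl0: "0 < dl" using dl_bounds by simp
  have B1n: "0 \<le> B1" unfolding B1_def using C2 w0 s Q_nonneg[of A T s] A0 AT by simp
  have B2n: "0 \<le> B2" unfolding B2_def using dl0 by simp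
  have B3n: "0 \<le> B3" unfolding B3_def using s io by simp
  have Fc: "continuous_on {0<..} (F s)" by (rule F_cont[OF s(1)])
  have split: "integral {a..R} (F s) \<le> integral {a..m} (F s) + integral {m..R} (F s)" if "0 < a" "0 < m" for a m
    by (rule integral_split_le[OF Fc F_nn that])
  have r3: "integral {X..R} (F s) \<le> B3" if "c * T \<le> X \<or> R \<le> X" for X
    unfolding B3_def by (rule region3'[OF s io cT0 w0 that hY])
  have r1: "integral {A..m} (F s) \<le> B1" if "m \<le> T" "\<And>t. 0 < t \<Longrightarrow> t < m \<Longrightarrow> x + t *\<^sub>R \<theta> \<in> D" for m
    unfolding B1_def by (rule region1[OF s A0 AT that(1) that(2) _ w0]) (use wT that(1) in auto)
  show ?thesis
  proof (cases "\<exists>t\<in>{0..R}. x + t *\<^sub>R \<theta> \<notin> D")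
    case False
    define m where "m = min T R"
    have m0: "0 < m" using T0 R0 by (simp add: m_def)
    have "integral {A..R} (F s) \<le> integral {A..m} (F s) + integral {m..R} (F s)" by (rule split[OF A0 m0])
    also have "integral {A..m} (F s) \<le> B1" by (rule r1) (use False in \<open>auto simp: m_def\<close>)
    also have "integral {m..R} (F s) \<le> B3" by (rule r3) (use cTT in \<open>cases "T \<le> R"; auto simp: m_def\<close>)
    finally have "integral {A..R} (F s) \<le> B1 + B3" by simp
    then show ?thesis using B2n unfolding B1_def[symmetric] B2_def[symmetric] B3_def[symmetric] by linarith
  next
    case True
    then obtain t1 where t1: "t1 \<in> {0..R}" "x + t1 *\<^sub>R \<theta> \<notin> D" by blast
    obtain rs where rs: "is_exit rs" "rs \<le> R" "dD D x \<le> rs" by (rule exit_ex[OF _ t1]) (use R0 in simp)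
    have rs0: "0 < rs" using rs by (auto simp: is_exit_def)
    have foe: "x + t *\<^sub>R \<theta> \<in> D" if "0 < t" "t < rs" for t using rs(1) that by (auto simp: is_exit_def)
    show ?thesis
    proof (cases "rs < c * T")
      case True
      define m where "m = min T R"
      have m0: "0 < m" using T0 R0 by (simp add: m_def)
      have "integral {A..R} (F s) \<le> integral {A..rs} (F s) + integral {rs..R} (F s)" by (rule split[OF A0 rs0])
      also have "integral {rs..R} (F s) \<le> integral {rs..m} (F s) + integral {m..R} (F s)" by (rule split[OF rs0 m0])
      also have "integral {A..rs} (F s) \<le> B1" by (rule r1) (use True cTT foe in auto)
      also have "integral {rs..m} (F s) \<le> B2" unfolding B2_def
      proof (rule region2'[OF s rs(1)])
        show "rs \<le> T" using True cTT by simp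
        show "\<omega> rs \<le> w" using True cTT rs0 by (intro wT) auto
        fix r assume r: "rs \<le> r" "r \<le> m"
        have wr: "\<omega> r \<le> w" "0 \<le> \<omega> r" using r rs0 wT wnn by (auto simp: m_def)
        have "4 * C2 * \<omega> r * rs \<le> 4 * C2 * w * (c * T)"
          using wr True C2 rs0 by (intro mult_mono) auto
        then show "4 * C2 * \<omega> r * rs \<le> dl" using hc by simp
      qed
      also have "integral {m..R} (F s) \<le> B3" by (rule r3) (use cTT in \<open>cases "T \<le> R"; auto simp: m_def\<close>)
      finally have "integral {A..R} (F s) \<le> B1 + (B2 + B3)" by simp
      then show ?thesis unfolding B1_def[symmetric] B2_def[symmetric] B3_def[symmetric] by linarith
    next
      case False
      define m where "m = min rs T"
      have m0: "0 < m" using T0 rs0 by (simp add: m_def)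
      have "integral {A..R} (F s) \<le> integral {A..m} (F s) + integral {m..R} (F s)" by (rule split[OF A0 m0])
      also have "integral {A..m} (F s) \<le> B1" by (rule r1) (use foe in \<open>auto simp: m_def\<close>)
      also have "integral {m..R} (F s) \<le> B3" by (rule r3) (use False cTT in \<open>auto simp: m_def\<close>)
      finally have "integral {A..R} (F s) \<le> B1 + B3" by simp
    then show ?thesis using B2n unfolding B1_def[symmetric] B2_def[symmetric] B3_def[symmetric] by linarith
    qed
  qed
qed

end


lemma G_lower:
  fixes s w :: real
  assumes "0 < s" "s < 1" "0 < w" "w \<le> 1/4"
  shows "1/4 \<le> Gs s w" "w powr (2 * s) \<le> 2 * w * Gs s w"
proof -
  have G: "Gs s w = Q s 1 (1/w)" using assms by (simp add: Gs_Q)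
  have w2: "2 \<le> 1/w" using assms by (simp add: field_simps)
  have "(2 - 1) * 2 powr (- 2 * s) \<le> Q s 1 2" by (rule Q_lower) (use assms in auto)
  moreover have "Q s 1 2 \<le> Q s 1 (1/w)" by (rule Q_mono) (use w2 in auto)
  moreover have "(1/4::real) \<le> 2 powr (- 2 * s)"
  proof -
    have "(2::real) powr (- 2) \<le> 2 powr (- 2 * s)" using assms by (intro powr_mono) auto
    moreover have "(2::real) powr (- 2) = 1/4" by (simp add: powr_minus_divide)
    ultimately show ?thesis by simp
  qed
  ultimately show "1/4 \<le> Gs s w" using G by simp
  have h: "1 \<le> 1 / (2 * w)" using assms by (simp add: field_simps)
  have "(1/w - 1/(2*w)) * (1/w) powr (- 2 * s) \<le> Q s (1/(2*w)) (1/w)"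
  proof (rule Q_lower)
    show "1 / (2 * w) \<le> 1 / w" using assms by (simp add: frac_le)
  qed (use assms in auto)
  moreover have "Q s (1/(2*w)) (1/w) \<le> Q s 1 (1/w)" by (rule Q_mono) (use assms h in \<open>auto simp: field_simps\<close>)
  moreover have "(1/w - 1/(2*w)) * (1/w) powr (- 2 * s) = w powr (2 * s) / (2 * w)"
    using assms by (simp add: powr_divide powr_minus_divide field_simps)
  ultimately have "w powr (2 * s) / (2 * w) \<le> Gs s w" using G by linarith
  then show "w powr (2 * s) \<le> 2 * w * Gs s w" using assms by (simp add: field_simps)
qed

lemma Q_G:
  fixes s a d w T :: real
  assumes "0 < s" "s < 1" "0 < a" "a < 1/4" "0 < d" "0 < w" "w \<le> 1/4" "T * w = d"
  shows "Q s (a * d) T \<le> d powr (1 - 2 * s) * ((4 / a^2 + 1) * Gs s w)"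
proof -
  have T: "T = d * (1/w)" using assms by (simp add: field_simps)
  have w1: "1 \<le> 1/w" using assms by (simp add: field_simps)
  have "Q s (a * d) T = Q s (d * a) (d * (1/w))" by (simp add: T mult.commute)
  also have "\<dots> = d powr (1 - 2 * s) * Q s a (1/w)"
    by (rule Q_scale) (use assms w1 in linarith)+
  also have "Q s a (1/w) = Q s a 1 + Q s 1 (1/w)" by (rule Q_add[symmetric]) (use assms w1 in auto)
  also have "Q s a 1 \<le> (1 - a) * a powr (- 2 * s)" by (rule Q_upper) (use assms in auto)
  also have "(1 - a) * a powr (- 2 * s) \<le> 1 * a powr (- 2)"
    using assms by (intro mult_mono powr_mono') auto
  also have "a powr (- 2) = 1 / a^2" using assms by (simp add: powr_minus_divide powr_realpow)
  also have "Q s 1 (1/w) = Gs s w" using assms by (simp add: Gs_Q)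
  also have "1 * (1 / a^2) + Gs s w \<le> (4 / a^2 + 1) * Gs s w"
  proof -
    have "1/4 \<le> Gs s w" using G_lower assms by auto
    then have "1 / a^2 \<le> (4 / a^2) * Gs s w" using assms by (simp add: field_simps)
    then show ?thesis by (simp add: algebra_simps)
  qed
  finally show ?thesis using assms by (simp add: mult_left_mono)
qed

lemma powr_le_max1: fixes X e :: real assumes "0 < X" "0 \<le> e" "e \<le> 1" shows "X powr e \<le> max 1 X"
proof (cases "1 \<le> X")
  case True
  then have "X powr e \<le> X powr 1" using assms by (intro powr_mono) auto
  then show ?thesis using assms by simp
next
  case False
  then have "X powr e \<le> 1 powr e" using assms by (intro powr_mono2) auto
  then show ?thesis by simp
qed

lemma powr_le_max2: fixes X e :: real assumes "0 < X" "0 \<le> e" "e \<le> 2" shows "X powr e \<le> (max 1 X)^2"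
proof -
  have M: "1 \<le> max 1 X" by simp
  have "X powr e \<le> (max 1 X) powr e" using assms by (intro powr_mono2) auto
  also have "\<dots> \<le> (max 1 X) powr 2" using M assms by (intro powr_mono) auto
  also have "\<dots> = (max 1 X)^2" using M by (simp add: powr_realpow)
  finally show ?thesis .
qed

lemma final_alg:
  fixes s s0 a d w T dl c \<iota> C1 C2 :: real
  assumes s: "0 < s0" "s0 \<le> s" "s < 1" and a: "0 < a" "a < 1/4" and d: "0 < d"
    and w: "0 < w" "w \<le> 1/4" and Tw: "T * w = d" and C: "0 < C1" "0 < C2" and dl: "d / C1 \<le> dl"
    and c: "0 < c" "c \<le> 1" and io: "0 < \<iota>" "\<iota> \<le> 1/6"
  shows "C2 * w * dl powr (s - 1) * (26 / s) * Q s (a * d) T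
     + 2 * (C2 * w) powr (1 + s) * T powr (1 - s) / dl
     + (3 * C2) powr s * w powr s * (c * T) powr (- s) / (s * (1 - \<iota>))
   \<le> (C2 * max 1 C1 * (26 / s0) * (4 / a^2 + 1) + 2 * (2 * C1 * (max 1 C2)^2 + max 1 (3 * C2) * (1 / c) * (2 / s0)))
      * (w / d powr s) * Gs s w"
proof -
  define G where "G = Gs s w"
  have s0': "0 < s" using s by simp
  have G4: "1/4 \<le> G" and W2: "w powr (2 * s) \<le> 2 * w * G" using G_lower[OF s0' s(3) w] by (auto simp: G_def)
  have G0: "0 < G" using G4 by simp
  have T0: "0 < T" using Tw d w by (metis zero_less_mult_pos2)
  have Td: "T = d / w" using Tw w by (simp add: field_simps)
  have dC: "0 < d / C1" using d C by simp
  have dl0: "0 < dl" using dC dl by simp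
  define D where "D = d powr (- s)"
  have D0: "0 < D" using d by (simp add: D_def)
  have wdD: "w / d powr s = w * D" using d by (simp add: D_def powr_minus_divide)
  have b1a: "dl powr (s - 1) \<le> (d / C1) powr (s - 1)" using dC dl s by (intro powr_mono2') auto
  have b1b: "(d / C1) powr (s - 1) = d powr (s - 1) * C1 powr (1 - s)"
    using d C by (simp add: powr_divide) (metis minus_diff_eq powr_minus_divide times_divide_eq_right mult_1_right)
  have b1c: "C1 powr (1 - s) \<le> max 1 C1" using C s by (intro powr_le_max1) auto
  have b1d: "Q s (a * d) T \<le> d powr (1 - 2 * s) * ((4 / a^2 + 1) * G)"
    unfolding G_def by (rule Q_G[OF s0' s(3) a d w Tw])
  have aw: "a * w \<le> 1" using mult_le_one[of a w] a w by simp
  have adT: "a * d \<le> T"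
  proof -
    have "(a * w) * T \<le> 1 * T" using aw T0 by (intro mult_right_mono) auto
    moreover have "(a * w) * T = a * d" using Tw by (simp add: mult_ac)
    ultimately show ?thesis by simp
  qed
  have Qn: "0 \<le> Q s (a * d) T" using a d adT by (intro Q_nonneg) auto
  have dd: "d powr (s - 1) * d powr (1 - 2 * s) = D" by (simp add: D_def powr_add[symmetric])
  have B1: "C2 * w * dl powr (s - 1) * (26 / s) * Q s (a * d) T
      \<le> C2 * max 1 C1 * (26 / s0) * (4 / a^2 + 1) * (w * D * G)"
  proof -
    have "dl powr (s - 1) \<le> d powr (s - 1) * max 1 C1"
      using b1a b1b b1c by (smt (verit) mult_left_mono powr_ge_zero)
    moreover have "26 / s \<le> 26 / s0" using s by (simp add: frac_le)
    ultimately have "C2 * w * dl powr (s - 1) * (26 / s) * Q s (a * d) T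
        \<le> C2 * w * (d powr (s - 1) * max 1 C1) * (26 / s0) * (d powr (1 - 2 * s) * ((4 / a^2 + 1) * G))"
      using C w s Qn b1d by (intro mult_mono) auto
    also have "\<dots> = C2 * max 1 C1 * (26 / s0) * (4 / a^2 + 1) * (w * (d powr (s - 1) * d powr (1 - 2 * s)) * G)"
      by (simp add: mult_ac)
    finally show ?thesis by (simp add: dd)
  qed
  have B2: "2 * (C2 * w) powr (1 + s) * T powr (1 - s) / dl \<le> 2 * C1 * (max 1 C2)^2 * (w powr (2 * s) * D)"
  proof -
    have e1: "(C2 * w) powr (1 + s) = C2 powr (1 + s) * w powr (1 + s)" using C w by (simp add: powr_mult)
    have e2: "T powr (1 - s) = d powr (1 - s) * w powr (s - 1)"
      using d w by (simp add: Td powr_divide) (metis minus_diff_eq powr_minus_divide times_divide_eq_right mult_1_right)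
    have e3: "w powr (1 + s) * w powr (s - 1) = w powr (2 * s)" by (simp add: powr_add[symmetric])
    have e4: "d powr (1 - s) / d = D" using d
      by (simp add: D_def) (metis powr_1_minus divide_eq_eq less_irrefl mult.commute)
    have "d \<le> C1 * dl" using dl C by (simp add: field_simps)
    then have i1: "1 / dl \<le> C1 / d" using dl0 d by (simp add: field_simps)
    have i2: "C2 powr (1 + s) \<le> (max 1 C2)^2" using C s by (intro powr_le_max2) auto
    have "2 * (C2 * w) powr (1 + s) * T powr (1 - s) / dl
        = 2 * C2 powr (1 + s) * (w powr (1 + s) * w powr (s - 1)) * d powr (1 - s) * (1 / dl)"
      by (simp add: e1 e2 mult_ac)
    also have "\<dots> \<le> 2 * (max 1 C2)^2 * (w powr (1 + s) * w powr (s - 1)) * d powr (1 - s) * (C1 / d)"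
      using i1 i2 dl0 by (intro mult_mono mult_right_mono) auto
    also have "\<dots> = 2 * C1 * (max 1 C2)^2 * (w powr (2 * s) * (d powr (1 - s) / d))"
      by (subst e3) (simp add: field_simps)
    finally show ?thesis by (simp add: e4)
  qed
  have B3: "(3 * C2) powr s * w powr s * (c * T) powr (- s) / (s * (1 - \<iota>))
      \<le> max 1 (3 * C2) * (1 / c) * (2 / s0) * (w powr (2 * s) * D)"
  proof -
    have e1: "(c * T) powr (- s) = c powr (- s) * D * w powr s"
      using c d w by (simp add: Td D_def powr_mult powr_divide powr_minus_divide)
    have e2: "w powr s * w powr s = w powr (2 * s)" by (simp add: powr_add[symmetric])
    have i1: "(3 * C2) powr s \<le> max 1 (3 * C2)" using C s by (intro powr_le_max1) auto
    have i2: "c powr (- s) \<le> 1 / c"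
    proof -
      have "c powr s \<ge> c powr 1" using c s by (intro powr_mono') auto
      then have "1 / c powr s \<le> 1 / c" using c by (intro divide_left_mono) auto
      then show ?thesis by (simp add: powr_minus_divide)
    qed
    have i3: "1 / (s * (1 - \<iota>)) \<le> 2 / s0"
    proof -
      have "s * (1/2) \<le> s * (1 - \<iota>)" using s io by (intro mult_left_mono) auto
      then have "s0 / 2 \<le> s * (1 - \<iota>)" using s by linarith
      then show ?thesis using s io by (simp add: frac_le field_simps)
    qed
    have "(3 * C2) powr s * w powr s * (c * T) powr (- s) / (s * (1 - \<iota>))
        = (3 * C2) powr s * c powr (- s) * (1 / (s * (1 - \<iota>))) * ((w powr s * w powr s) * D)"
      by (subst e1) (simp add: mult_ac)
    also have "\<dots> \<le> max 1 (3 * C2) * (1 / c) * (2 / s0) * ((w powr s * w powr s) * D)"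
      using i1 i2 i3 D0 s io c by (intro mult_mono mult_right_mono) auto
    finally show ?thesis by (simp add: e2)
  qed
  have W2D: "w powr (2 * s) * D \<le> 2 * (w * D * G)" using W2 D0 by (simp add: mult_right_mono mult_ac)
  have k2: "0 \<le> 2 * C1 * (max 1 C2)^2" using C by simp
  have k3: "0 \<le> max 1 (3 * C2) * (1 / c) * (2 / s0)" using c s by simp
  have "C2 * w * dl powr (s - 1) * (26 / s) * Q s (a * d) T
     + 2 * (C2 * w) powr (1 + s) * T powr (1 - s) / dl
     + (3 * C2) powr s * w powr s * (c * T) powr (- s) / (s * (1 - \<iota>))
     \<le> C2 * max 1 C1 * (26 / s0) * (4 / a^2 + 1) * (w * D * G)
       + 2 * C1 * (max 1 C2)^2 * (2 * (w * D * G)) + max 1 (3 * C2) * (1 / c) * (2 / s0) * (2 * (w * D * G))"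
    using B1 B2 B3 mult_left_mono[OF W2D k2] mult_left_mono[OF W2D k3] by linarith
  also have "\<dots> = (C2 * max 1 C1 * (26 / s0) * (4 / a^2 + 1) + 2 * (2 * C1 * (max 1 C2)^2 + max 1 (3 * C2) * (1 / c) * (2 / s0)))
      * (w * D) * G" by (simp add: algebra_simps)
  finally show ?thesis by (simp add: wdD G_def)
qed


theorem lemma5p3:
  fixes D :: "'a::euclidean_space set" and \<omega> :: "real \<Rightarrow> real"
    and \<dd> :: "'a \<Rightarrow> real" and g :: "'a \<Rightarrow> 'a"
    and s0 a \<rho> C0 C1 C2 C3 :: real
  assumes "0 < s0" "s0 < 1" "0 < a" "a < 1/4"
    and "uniform_C1dini_domain D \<omega> \<rho> C0"
    and "condM (min (1/6) (s0/4)) \<omega>"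
    and "regularized_distance D \<omega> \<dd> g C1 C2 C3"
  shows "\<exists>\<rho>1 C. 0 < \<rho>1 \<and> \<rho>1 < \<rho> \<and> C > 0 \<and>
    (\<forall>s\<in>{s0..<1}. \<forall>x\<in>D. dD D x < \<rho>1 / 2 \<longrightarrow> (\<forall>\<theta>::'a. norm \<theta> = 1 \<longrightarrow>
       integral {a * dD D x..\<rho>1}
         (\<lambda>r. \<bar>\<dd> (x + r *\<^sub>R \<theta>) powr s - posp (\<dd> x + g x \<bullet> (r *\<^sub>R \<theta>)) powr s\<bar>
               / r powr (1 + 2 * s))
       \<le> C * (\<omega> (the_inv_into {0..} (\<lambda>t. t * \<omega> t) (dD D x)) / dD D x powr s)
           * Gs s (\<omega> (the_inv_into {0..} (\<lambda>t. t * \<omega> t) (dD D x)))))"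
proof -
  note s0 = assms(1,2) and a = assms(3,4)
  define \<iota> where "\<iota> = min (1/6) (s0/4)"
  have io: "0 < \<iota>" "\<iota> \<le> 1/6" "\<iota> < 1" using s0 by (auto simp: \<iota>_def)
  from assms(6) have cM: "continuous_on {0..} \<omega>" "strict_mono_on {0..} \<omega>" "\<omega> 0 = 0"
    "\<exists>t0>0. antimono_on {0<..<t0} (\<lambda>t. \<omega> t / t powr \<iota>)"
    unfolding condM_def \<iota>_def by auto
  then obtain t0 where t0: "t0 > 0" "antimono_on {0<..<t0} (\<lambda>t. \<omega> t / t powr \<iota>)" by blast
  from assms(5) have openD: "open D" and rho: "\<rho> > 0" unfolding uniform_C1dini_domain_def by auto
  from assms(7) have C1: "C1 > 0" and C2: "C2 > 0"
    and lipE: "\<exists>L. \<forall>x y. \<bar>\<dd> x - \<dd> y\<bar> \<le> L * dist x y"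
    and comp: "\<forall>x. dD D x / C1 \<le> \<dd> x \<and> \<dd> x \<le> C1 * dD D x"
    and derE: "\<exists>H::'a \<Rightarrow> 'a \<Rightarrow> 'a. (\<forall>x\<in>D. (\<dd> has_derivative (\<lambda>h. g x \<bullet> h)) (at x) \<and> (g has_derivative H x) (at x)) \<and>
        (\<forall>v. continuous_on D (\<lambda>x. H x v)) \<and> (\<forall>x\<in>D. onorm (H x) \<le> C3 * \<omega> (dD D x) / dD D x)"
    and gmod: "\<forall>x\<in>D. \<forall>y\<in>D. norm (g x - g y) \<le> C2 * \<omega> (dist x y)"
    unfolding regularized_distance_def by auto
  obtain L where lip: "\<forall>x y. \<bar>\<dd> x - \<dd> y\<bar> \<le> L * dist x y" using lipE by blast
  have der: "\<forall>y\<in>D. (\<dd> has_derivative (\<lambda>h. g y \<bullet> h)) (at y)" using derE by blast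
  have wmono: "mono_on {0..} \<omega>" using cM(2) by (rule strict_mono_on_imp_mono_on)
  have wle: "\<omega> u \<le> \<omega> v" if "0 \<le> u" "u \<le> v" for u v using wmono that by (auto simp: mono_on_def)
  have wlt: "\<omega> u < \<omega> v" if "0 \<le> u" "u < v" for u v using cM(2) that by (auto simp: strict_mono_on_def)
  have wnn: "\<forall>t\<ge>0. \<omega> t \<ge> 0" using wle[of 0] cM(3) by auto
  obtain \<delta>0 where d0: "\<delta>0 > 0" "\<And>t. t \<in> {0..} \<Longrightarrow> dist t 0 < \<delta>0 \<Longrightarrow> dist (\<omega> t) (\<omega> 0) < 1/4"
    using cM(1) unfolding continuous_on_iff by (metis atLeast_iff order_refl zero_less_divide_1_iff zero_less_numeral)
  define \<tau> where "\<tau> = min (\<delta>0/2) (t0/2)"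
  have tau: "0 < \<tau>" "\<tau> < t0" using d0 t0 by (auto simp: \<tau>_def)
  have "\<tau> < \<delta>0" using d0 by (simp add: \<tau>_def)
  then have "dist (\<omega> \<tau>) (\<omega> 0) < 1/4" using d0(2)[of \<tau>] tau by (simp add: dist_real_def)
  then have wtau: "\<omega> \<tau> \<le> 1/4" using cM(3) by (simp add: dist_real_def)
  have wtau0: "0 < \<omega> \<tau>" using wlt[of 0 \<tau>] tau cM(3) by simp
  define fT where "fT t = t * \<omega> t" for t
  define \<rho>1 where "\<rho>1 = min (\<rho>/2) (\<tau> * \<omega> \<tau>)"
  have rho1: "0 < \<rho>1" "\<rho>1 < \<rho>" "\<rho>1 \<le> \<tau> * \<omega> \<tau>" using rho tau wtau0 by (auto simp: \<rho>1_def)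
  have rho1t: "\<rho>1 < t0"
  proof -
    have "\<tau> * \<omega> \<tau> \<le> \<tau> * 1" using wtau tau by (intro mult_left_mono) auto
    then show ?thesis using rho1 tau by linarith
  qed
  define c where "c = min (1/2) (1 / (4 * C1 * C2))"
  have c: "0 < c" "c \<le> 1" "4 * C2 * c \<le> 1 / C1" using C1 C2
    by (auto simp: c_def min_def field_simps)
  define Cc where "Cc = C2 * max 1 C1 * (26 / s0) * (4 / a^2 + 1) + 2 * (2 * C1 * (max 1 C2)^2 + max 1 (3 * C2) * (1 / c) * (2 / s0))"
  have Cc: "Cc > 0"
  proof -
    have "0 < 4 / a^2 + 1" using a by (simp add: add_pos_pos)
    then have "0 < C2 * max 1 C1 * (26 / s0) * (4 / a^2 + 1)" using C2 s0 by (intro mult_pos_pos) auto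
    moreover have "0 \<le> 2 * (2 * C1 * (max 1 C2)^2 + max 1 (3 * C2) * (1 / c) * (2 / s0))" using C1 c s0 by simp
    ultimately show ?thesis by (simp add: Cc_def)
  qed
  have fT_mono: "strict_mono_on {0..} fT"
  proof (rule strict_mono_onI)
    fix u v :: real assume uv: "u \<in> {0..}" "v \<in> {0..}" "u < v"
    have "u * \<omega> u \<le> u * \<omega> v" using uv wle[of u v] by (intro mult_left_mono) auto
    also have "\<dots> < v * \<omega> v" using uv wlt[of 0 v] cM(3) by (intro mult_strict_right_mono) auto
    finally show "fT u < fT v" by (simp add: fT_def)
  qed
  have fT_inj: "inj_on fT {0..}" using fT_mono by (rule strict_mono_on_imp_inj_on)
  have fT_cont: "continuous_on {0..\<tau>} fT" unfolding fT_def
    by (intro continuous_intros continuous_on_subset[OF cM(1)]) auto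
  have main: "integral {a * dD D x..\<rho>1}
         (\<lambda>r. \<bar>\<dd> (x + r *\<^sub>R \<theta>) powr s - posp (\<dd> x + g x \<bullet> (r *\<^sub>R \<theta>)) powr s\<bar>
               / r powr (1 + 2 * s))
       \<le> Cc * (\<omega> (the_inv_into {0..} (\<lambda>t. t * \<omega> t) (dD D x)) / dD D x powr s)
           * Gs s (\<omega> (the_inv_into {0..} (\<lambda>t. t * \<omega> t) (dD D x)))"
    if s: "s \<in> {s0..<1}" and xD: "x \<in> D" and dx: "dD D x < \<rho>1 / 2" and th: "norm \<theta> = 1" for s x \<theta>
  proof -
    define d where "d = dD D x"
    define T where "T = the_inv_into {0..} (\<lambda>t. t * \<omega> t) d"
    have fTe: "(\<lambda>t. t * \<omega> t) = fT" by (simp add: fT_def fun_eq_iff)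
    have d0: "0 \<le> d" by (simp add: d_def dD_def infdist_nonneg)
    have sp: "0 < s" "s < 1" "s0 \<le> s" using s s0 by auto
    have goal: "integral {a * d..\<rho>1}
         (\<lambda>r. \<bar>\<dd> (x + r *\<^sub>R \<theta>) powr s - posp (\<dd> x + g x \<bullet> (r *\<^sub>R \<theta>)) powr s\<bar>
               / r powr (1 + 2 * s)) \<le> Cc * (\<omega> T / d powr s) * Gs s (\<omega> T)"
    proof (cases "d = 0")
      case True
      have nD: "- D = {}"
      proof (rule ccontr)
        assume ne: "- D \<noteq> {}"
        have "closed (- D)" using openD by auto
        then have "0 < infdist x (- D)" using infdist_pos_not_in_closed[OF _ ne, of x] xD by auto
        then show False using True by (simp add: d_def dD_def)
      qed
      have dd0: "\<dd> y = 0" for y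
      proof -
        have "dD D y = 0" using nD by (simp add: dD_def infdist_def)
        then show ?thesis using comp[rule_format, of y] by simp
      qed
      have dz: "\<dd> = (\<lambda>y. 0)" using dd0 by (simp add: fun_eq_iff)
      have gx: "g x = 0"
      proof -
        have h1: "((\<lambda>y. 0::real) has_derivative (\<lambda>h. g x \<bullet> h)) (at x)" using der xD dz by auto
        have h2: "((\<lambda>y. 0::real) has_derivative (\<lambda>h. 0)) (at x)" by (rule has_derivative_const)
        have "(\<lambda>h. g x \<bullet> h) = (\<lambda>h. 0)" by (rule has_derivative_unique[OF h1 h2])
        then have "g x \<bullet> g x = 0" by (metis (mono_tags))
        then show ?thesis by simp
      qed
      have integrand0: "(\<lambda>r. \<bar>\<dd> (x + r *\<^sub>R \<theta>) powr s - posp (\<dd> x + g x \<bullet> (r *\<^sub>R \<theta>)) powr s\<bar>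
               / r powr (1 + 2 * s)) = (\<lambda>r. 0)"
        by (simp add: fun_eq_iff dd0 gx posp_def)
      have T0: "T = 0"
      proof -
        have "the_inv_into {0..} fT (fT 0) = 0" by (rule the_inv_into_f_f[OF fT_inj]) auto
        then show ?thesis using True by (simp add: T_def fTe fT_def)
      qed
      show ?thesis using T0 cM(3) True integrand0 by simp
    next
      case False
      then have dpos: "0 < d" using d0 by simp
      have dlt: "d \<le> fT \<tau>" using dx rho1 by (simp add: d_def fT_def)
      obtain T' where T': "0 \<le> T'" "T' \<le> \<tau>" "fT T' = d"
        using IVT'[of fT 0 d \<tau>, OF _ dlt _ fT_cont] d0 tau by (auto simp: fT_def)
      have TT': "T = T'"
      proof -
        have "the_inv_into {0..} fT (fT T') = T'" by (rule the_inv_into_f_f[OF fT_inj]) (use T' in auto)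
        then show ?thesis using T' by (simp add: T_def fTe)
      qed
      have Tw: "T * \<omega> T = d" using T' TT' by (simp add: fT_def)
      have T0: "0 < T" using Tw dpos T' TT' by (cases "T = 0") auto
      define w where "w = \<omega> T"
      have w0: "0 < w" using wlt[of 0 T] T0 cM(3) by (simp add: w_def)
      have w4: "w \<le> 1/4" using wle[of T \<tau>] T' TT' wtau by (simp add: w_def)
      have Tw': "T * w = d" using Tw by (simp add: w_def)
      interpret R: ray D \<dd> g \<omega> C1 C2 L x \<theta>
        by (unfold_locales) (use openD lip comp C1 C2 der gmod wmono wnn xD th dpos in \<open>auto simp: d_def\<close>)
      have cT0: "0 < c * T" using c T0 by simp
      have cTT: "c * T \<le> T" using c T0 by simp
      have Tt0: "T < t0" using T' TT' tau by simp
      have AT: "2 * (a * d) \<le> T"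
      proof -
        have "T * w \<le> T * (1/4)" using w4 T0 by (intro mult_left_mono) auto
        then have "d \<le> T / 4" using Tw' by simp
        moreover have "2 * (a * d) \<le> d / 2" using a dpos by (simp add: field_simps)
        ultimately show ?thesis using T0 by linarith
      qed
      have hY: "\<omega> r \<le> w * (r / (c * T)) powr \<iota>" if r: "c * T \<le> r" "r \<le> \<rho>1" for r
      proof -
        have r0: "0 < r" using r cT0 by simp
        have "\<omega> r / r powr \<iota> \<le> \<omega> (c * T) / (c * T) powr \<iota>"
          using t0(2) r cT0 rho1t cTT Tt0 unfolding monotone_on_def by auto
        then have "\<omega> r \<le> \<omega> (c * T) / (c * T) powr \<iota> * r powr \<iota>" using r0 by (simp add: divide_le_eq)
        also have "\<dots> = \<omega> (c * T) * (r / (c * T)) powr \<iota>" using r0 cT0 by (simp add: powr_divide)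
        also have "\<dots> \<le> w * (r / (c * T)) powr \<iota>"
          using wle[of "c * T" T] cT0 cTT by (intro mult_right_mono) (auto simp: w_def)
        finally show ?thesis .
      qed
      have hc: "4 * C2 * w * (c * T) \<le> R.dl"
      proof -
        have "4 * C2 * w * (c * T) = (4 * C2 * c) * d" using Tw' by (simp add: mult_ac)
        also have "\<dots> \<le> (1 / C1) * d" using c dpos by (intro mult_right_mono) auto
        also have "\<dots> \<le> R.dl" using R.dl_bounds(1) by (simp add: d_def)
        finally show ?thesis .
      qed
      have tot: "integral {a * d..\<rho>1} (R.F s) \<le> C2 * w * R.dl powr (s - 1) * (26 / s) * Q s (a * d) T
          + 2 * (C2 * w) powr (1 + s) * T powr (1 - s) / R.dl
          + (3 * C2) powr s * w powr s * (c * T) powr (- s) / (s * (1 - \<iota>))"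
      proof (rule R.total[OF sp(1,2) io(1,3) _ AT c(1,2) rho1(1) less_imp_le[OF w0]])
        show "0 < a * d" using a dpos by simp
        show "\<omega> r \<le> w" if "0 \<le> r" "r \<le> T" for r using wle that by (simp add: w_def)
        show "\<omega> r \<le> w * (r / (c * T)) powr \<iota>" if "c * T \<le> r" "r \<le> \<rho>1" for r using hY that .
        show "4 * C2 * w * (c * T) \<le> R.dl" by (rule hc)
      qed
      have fin: "C2 * w * R.dl powr (s - 1) * (26 / s) * Q s (a * d) T
          + 2 * (C2 * w) powr (1 + s) * T powr (1 - s) / R.dl
          + (3 * C2) powr s * w powr s * (c * T) powr (- s) / (s * (1 - \<iota>))
          \<le> Cc * (w / d powr s) * Gs s w"
        unfolding Cc_def
        by (rule final_alg[OF s0(1) sp(3) sp(2) a dpos w0 w4 Tw' C1 C2 _ c(1,2) io(1,2)])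
           (use R.dl_bounds(1) in \<open>simp add: d_def\<close>)
      have ieq: "(\<lambda>r. \<bar>\<dd> (x + r *\<^sub>R \<theta>) powr s - posp (\<dd> x + g x \<bullet> (r *\<^sub>R \<theta>)) powr s\<bar>
               / r powr (1 + 2 * s)) = R.F s"
        by (simp add: fun_eq_iff R.F_def R.u_def R.l_def R.dl_def R.p_def mult.commute)
      have "integral {a * d..\<rho>1} (R.F s) \<le> Cc * (w / d powr s) * Gs s w" using tot fin by linarith
      then show ?thesis unfolding ieq w_def .
    qed
    then show ?thesis by (simp add: d_def T_def)
  qed
  show ?thesis
    by (rule exI[of _ \<rho>1], rule exI[of _ Cc]) (use rho1 Cc main in auto)
qed


end
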